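(* Let $\Gamma$ be a finitely generated discrete group, $A\trianglelefteq\Gamma$ normal of finite index, $Q=\Gamma/A$, and $\psi\colon Q\to PU(n)$ a homomorphism. The finite group $\mathrm{Hom}(Q,S^1)$ acts freely on $\mathrm{Hom}_A(\Gamma,U(n))_\psi$ by $(\chi\cdot\rho)(\gamma)=\chi([\gamma])\rho(\gamma)$, and the restriction map $R\colon\mathrm{Hom}_A(\Gamma,U(n))_\psi\to\mathrm{Hom}(A,S^1)$, $\rho\mapsto\rho|_A$, induces a homeomorphism from the orbit space $\mathrm{Hom}_A(\Gamma,U(n))_\psi/\mathrm{Hom}(Q,S^1)$ onto the image $R(\mathrm{Hom}_A(\Gamma,U(n))_\psi)$. In particular $R$ is a finite covering map onto its image with structure group $\mathrm{Hom}(Q,S^1)$.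
   Context: $S^1\subset U(n)$ denotes the scalar matrices (identified with the unit circle), $PU(n)=U(n)/S^1$. $\mathrm{Hom}_A(\Gamma,U(n))$ is the set of $\rho\in\mathrm{Hom}(\Gamma,U(n))$ with $\rho(A)\subset S^1$ (so $\rho|_A\in\mathrm{Hom}(A,S^1)$), and $\mathrm{Hom}_A(\Gamma,U(n))_\psi$ is the subset with induced homomorphism $\bar\rho\colon Q\to PU(n)$ equal to $\psi$. All representation spaces carry the topology of pointwise convergence. *)

theory Defs
  imports "HOL-Analysis.Analysis" "HOL-Algebra.Group_Action" "HOL-Algebra.Generated_Groups"
begin

(* conjugate transpose of a complex square matrix *)
definition adj_mat :: "complex^'n^'n \<Rightarrow> complex^'n^'n" where
  "adj_mat M = (\<chi> i j. cnj (M $ j $ i))"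

(* the unitary group U(n), n = CARD('n) *)
definition unitary_group :: "(complex^'n^'n) monoid" where
  "unitary_group = \<lparr> carrier = {M. M ** adj_mat M = mat 1 \<and> adj_mat M ** M = mat 1},
                     mult = (**), one = mat 1 \<rparr>"

(* S^1 as the scalar matrices in U(n) *)
definition scalar_circle :: "(complex^'n^'n) set" where
  "scalar_circle = {mat c | c. cmod c = 1}"

definition circle_group :: "(complex^'n^'n) monoid" where
  "circle_group = unitary_group\<lparr>carrier := scalar_circle\<rparr>"

(* PU(n) = U(n)/S^1 *)
definition proj_unitary_group :: "(complex^'n^'n) set monoid" where
  "proj_unitary_group = unitary_group Mod scalar_circle"

(* Hom(Gamma,U(n)) as (extensional) functions on the carrier *)
definition Hom_rep :: "('g,'b) monoid_scheme \<Rightarrow> ('g \<Rightarrow> complex^'n^'n) set" where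
  "Hom_rep G = hom G unitary_group \<inter> extensional (carrier G)"

(* Hom_A(Gamma,U(n)) *)
definition Hom_A :: "('g,'b) monoid_scheme \<Rightarrow> 'g set \<Rightarrow> ('g \<Rightarrow> complex^'n^'n) set" where
  "Hom_A G A = {\<rho> \<in> Hom_rep G. \<rho> ` A \<subseteq> scalar_circle}"

(* Hom_A(Gamma,U(n))_psi: the induced map Q -> PU(n), [g] |-> S^1 #> rho g, equals psi *)
definition Hom_A_psi :: "('g,'b) monoid_scheme \<Rightarrow> 'g set \<Rightarrow> ('g set \<Rightarrow> (complex^'n^'n) set)
     \<Rightarrow> ('g \<Rightarrow> complex^'n^'n) set" where
  "Hom_A_psi G A \<psi> = {\<rho> \<in> Hom_A G A.
      \<forall>g \<in> carrier G. \<psi> (A #>\<^bsub>G\<^esub> g) = scalar_circle #>\<^bsub>unitary_group\<^esub> \<rho> g}"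

(* Hom(A,S^1) *)
definition Hom_circle :: "('g,'b) monoid_scheme \<Rightarrow> 'g set \<Rightarrow> ('g \<Rightarrow> complex^'n^'n) set" where
  "Hom_circle G A = hom (G\<lparr>carrier := A\<rparr>) circle_group \<inter> extensional A"

(* the character group Hom(Q,S^1), Q = G Mod A, with pointwise multiplication *)
definition char_group :: "('g,'b) monoid_scheme \<Rightarrow> 'g set \<Rightarrow> ('g set \<Rightarrow> complex^'n^'n) monoid" where
  "char_group G A = \<lparr> carrier = hom (G Mod A) circle_group \<inter> extensional (carrier (G Mod A)),
       mult = (\<lambda>c1 c2. \<lambda>q \<in> carrier (G Mod A). c1 q ** c2 q),
       one = (\<lambda>q \<in> carrier (G Mod A). mat 1) \<rparr>"

(* the action (chi . rho)(g) = chi([g]) rho(g) *)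
definition char_action :: "('g,'b) monoid_scheme \<Rightarrow> 'g set \<Rightarrow> ('g \<Rightarrow> complex^'n^'n) set
     \<Rightarrow> ('g set \<Rightarrow> complex^'n^'n) \<Rightarrow> ('g \<Rightarrow> complex^'n^'n) \<Rightarrow> ('g \<Rightarrow> complex^'n^'n)" where
  "char_action G A E c = (\<lambda>\<rho> \<in> E. \<lambda>g \<in> carrier G. c (A #>\<^bsub>G\<^esub> g) ** \<rho> g)"

(* topology of pointwise convergence on functions I -> 'a *)
definition pointwise_top :: "'i set \<Rightarrow> ('i \<Rightarrow> 'a::topological_space) topology" where
  "pointwise_top I = product_topology (\<lambda>_. euclidean) I"

(* quotient topology on a set P of subsets (e.g. a partition of topspace X) *)
definition partition_quotient_top :: "'a topology \<Rightarrow> 'a set set \<Rightarrow> 'a set topology" where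
  "partition_quotient_top X P = topology (\<lambda>U. U \<subseteq> P \<and> openin X (\<Union>U))"

(* covering maps for abstract topological spaces (mirrors covering_space) *)
definition covering_map :: "'a topology \<Rightarrow> 'b topology \<Rightarrow> ('a \<Rightarrow> 'b) \<Rightarrow> bool" where
  "covering_map X Y p \<longleftrightarrow>
     continuous_map X Y p \<and> p ` topspace X = topspace Y \<and>
     (\<forall>y \<in> topspace Y. \<exists>T. y \<in> T \<and> openin Y T \<and>
        (\<exists>v. \<Union>v = {x \<in> topspace X. p x \<in> T} \<and>
             (\<forall>u \<in> v. openin X u) \<and> pairwise disjnt v \<and>
             (\<forall>u \<in> v. homeomorphic_map (subtopology X u) (subtopology Y T) p)))"

end

theory Submission
  imports Defs "HOL-Algebra.Multiplicative_Group"
begin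


lemma mat_mult_left: "(mat c :: complex^'n^'n) ** M = (\<chi> i j. c * M$i$j)"
  unfolding matrix_matrix_mult_def mat_def
  by (auto simp: if_distrib if_distribR sum.delta'[OF finite] cong: if_cong)

lemma mat_mult_right: "M ** (mat c :: complex^'n^'n) = (\<chi> i j. M$i$j * c)"
  unfolding matrix_matrix_mult_def mat_def
  by (auto simp: if_distrib if_distribR sum.delta'[OF finite] cong: if_cong)

lemma mat_comm: "(mat c :: complex^'n^'n) ** M = M ** mat c"
  by (simp add: mat_mult_left mat_mult_right mult.commute)

lemma mat_mat: "(mat a :: complex^'n^'n) ** mat b = mat (a*b)"
  by (subst mat_mult_left) (simp add: vec_eq_iff mat_def)

lemma mat_inj: assumes "(mat a :: complex^'n^'n) = mat b" shows "a = b"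
proof -
  have "(mat a :: complex^'n^'n) $ i $ i = mat b $ i $ i" for i using assms by (simp only:)
  from this[of undefined] show ?thesis by (simp add: mat_def)
qed

lemma adj_mat_mat: "adj_mat (mat c :: complex^'n^'n) = mat (cnj c)"
  by (simp add: adj_mat_def mat_def vec_eq_iff)

lemma adj_adj: "adj_mat (adj_mat M) = (M :: complex^'n^'n)"
  by (simp add: adj_mat_def vec_eq_iff)

lemma adj_mult: "adj_mat (A ** B) = adj_mat B ** adj_mat (A :: complex^'n^'n)"
  by (simp add: adj_mat_def matrix_matrix_mult_def vec_eq_iff mult.commute)

lemma unitary_carrier: "carrier (unitary_group :: (complex^'n^'n) monoid) = {M. M ** adj_mat M = mat 1 \<and> adj_mat M ** M = mat 1}"
  by (simp add: unitary_group_def)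

lemma unitary_mult[simp]: "mult (unitary_group :: (complex^'n^'n) monoid) = (**)"
  by (simp add: unitary_group_def)
lemma unitary_one[simp]: "one (unitary_group :: (complex^'n^'n) monoid) = mat 1"
  by (simp add: unitary_group_def)

lemma adj_one: "adj_mat (mat 1 :: complex^'n^'n) = mat 1"
  by (simp add: adj_mat_mat)

lemma unitary_group_group: "group (unitary_group :: (complex^'n^'n) monoid)"
proof (rule groupI)
  fix x y :: "complex^'n^'n"
  assume x: "x \<in> carrier unitary_group" and y: "y \<in> carrier unitary_group"
  have "x ** y ** adj_mat (x ** y) = x ** (y ** adj_mat y) ** adj_mat x"
    by (simp add: adj_mult matrix_mul_assoc)
  moreover have "adj_mat (x ** y) ** (x ** y) = adj_mat y ** (adj_mat x ** x) ** y"
    by (simp add: adj_mult matrix_mul_assoc)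
  ultimately show "x \<otimes>\<^bsub>unitary_group\<^esub> y \<in> carrier unitary_group"
    using x y by (simp add: unitary_carrier)
next
  show "\<one>\<^bsub>unitary_group\<^esub> \<in> carrier (unitary_group :: (complex^'n^'n) monoid)"
    by (simp add: unitary_carrier adj_one)
next
  fix x y z :: "complex^'n^'n"
  show "x \<otimes>\<^bsub>unitary_group\<^esub> y \<otimes>\<^bsub>unitary_group\<^esub> z = x \<otimes>\<^bsub>unitary_group\<^esub> (y \<otimes>\<^bsub>unitary_group\<^esub> z)"
    by (simp add: matrix_mul_assoc)
next
  fix x :: "complex^'n^'n"
  show "\<one>\<^bsub>unitary_group\<^esub> \<otimes>\<^bsub>unitary_group\<^esub> x = x" by simp
next
  fix x :: "complex^'n^'n"
  assume x: "x \<in> carrier unitary_group"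
  then have "adj_mat x \<in> carrier unitary_group"
    by (simp add: unitary_carrier adj_adj)
  then show "\<exists>y\<in>carrier unitary_group. y \<otimes>\<^bsub>unitary_group\<^esub> x = \<one>\<^bsub>unitary_group\<^esub>"
    using x by (auto simp: unitary_carrier)
qed

lemma unitary_inv: "(x :: complex^'n^'n) \<in> carrier unitary_group \<Longrightarrow> inv\<^bsub>unitary_group\<^esub> x = adj_mat x"
  by (rule group.inv_equality[OF unitary_group_group]) (auto simp: unitary_carrier adj_adj)

lemma cnj_norm1: "cmod c = 1 \<Longrightarrow> cnj c * c = 1"
  by (metis complex_norm_square mult.commute norm_one of_real_1 power_one)

lemma cnj_norm1': "cmod c = 1 \<Longrightarrow> c * cnj c = 1"
  using cnj_norm1 by (simp add: mult.commute)

lemma scalar_circle_mem: "M \<in> scalar_circle \<longleftrightarrow> (\<exists>c. M = mat c \<and> cmod c = 1)"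
  by (auto simp: scalar_circle_def)

lemma sc_one: "mat 1 \<in> scalar_circle" by (force simp: scalar_circle_def)

lemma sc_mult: "a \<in> scalar_circle \<Longrightarrow> b \<in> scalar_circle \<Longrightarrow> (a ** b :: complex^'n^'n) \<in> scalar_circle"
  by (auto simp: scalar_circle_def mat_mat norm_mult)

lemma sc_comm: "a \<in> scalar_circle \<Longrightarrow> a ** M = M ** (a :: complex^'n^'n)"
  by (auto simp: scalar_circle_def mat_comm)

lemma sc_adj: "a \<in> scalar_circle \<Longrightarrow> adj_mat (a :: complex^'n^'n) \<in> scalar_circle"
  by (auto simp: scalar_circle_def adj_mat_mat)

lemma sc_unitary: "a \<in> scalar_circle \<Longrightarrow> (a :: complex^'n^'n) \<in> carrier unitary_group"
  by (auto simp: scalar_circle_def unitary_carrier adj_mat_mat mat_mat cnj_norm1 cnj_norm1')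

lemma sc_subgroup: "subgroup scalar_circle (unitary_group :: (complex^'n^'n) monoid)"
proof (rule subgroup.intro)
  show "scalar_circle \<subseteq> carrier (unitary_group :: (complex^'n^'n) monoid)" using sc_unitary by blast
  show "\<And>x y. x \<in> scalar_circle \<Longrightarrow> y \<in> scalar_circle \<Longrightarrow> x \<otimes>\<^bsub>unitary_group\<^esub> y \<in> (scalar_circle :: (complex^'n^'n) set)"
    by (simp add: sc_mult)
  show "\<one>\<^bsub>unitary_group\<^esub> \<in> (scalar_circle :: (complex^'n^'n) set)" by (simp add: sc_one)
  show "\<And>x. x \<in> scalar_circle \<Longrightarrow> inv\<^bsub>unitary_group\<^esub> x \<in> (scalar_circle :: (complex^'n^'n) set)"
    by (simp add: sc_adj sc_unitary unitary_inv)
qed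

lemma circle_group_group: "group (circle_group :: (complex^'n^'n) monoid)"
  unfolding circle_group_def
  by (rule subgroup.subgroup_is_group[OF sc_subgroup unitary_group_group])

lemma circle_carrier[simp]: "carrier (circle_group :: (complex^'n^'n) monoid) = scalar_circle"
  by (simp add: circle_group_def)
lemma circle_mult[simp]: "mult (circle_group :: (complex^'n^'n) monoid) = (**)"
  by (simp add: circle_group_def)
lemma circle_one[simp]: "one (circle_group :: (complex^'n^'n) monoid) = mat 1"
  by (simp add: circle_group_def)

lemma circle_pow: "(mat c :: complex^'n^'n) [^]\<^bsub>circle_group\<^esub> (k::nat) = mat (c ^ k)"
  by (induction k) (simp_all add: mat_mat mult.commute)

lemma sc_cancel: "a \<in> scalar_circle \<Longrightarrow> M \<in> carrier unitary_group \<Longrightarrow> a ** M = (M :: complex^'n^'n) \<Longrightarrow> a = mat 1"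
proof -
  assume a: "a \<in> scalar_circle" and M: "M \<in> carrier unitary_group" and e: "a ** M = M"
  have "a = a ** (M ** adj_mat M)" using M by (simp add: unitary_carrier)
  also have "\<dots> = (a ** M) ** adj_mat M" by (simp add: matrix_mul_assoc)
  also have "\<dots> = mat 1" using e M by (simp add: unitary_carrier)
  finally show ?thesis .
qed




locale ctx =
  fixes G :: "'g monoid" and A :: "'g set" and \<psi> :: "'g set \<Rightarrow> (complex^'n^'n) set"
  assumes grp: "group G" and nrm: "A \<lhd> G" and fin: "finite (rcosets\<^bsub>G\<^esub> A)"
    and psi: "\<psi> \<in> hom (G Mod A) proj_unitary_group"
begin

interpretation G: group G by (rule grp)
interpretation N: normal A G by (rule nrm)

lemma Qgrp: "group (G Mod A)" by (rule N.factorgroup_is_group)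

lemma Qcarrier: "carrier (G Mod A) = rcosets\<^bsub>G\<^esub> A" by (simp add: FactGroup_def)

lemma A_sub: "A \<subseteq> carrier G" by (rule N.subset)

lemma coset_in: "g \<in> carrier G \<Longrightarrow> A #>\<^bsub>G\<^esub> g \<in> carrier (G Mod A)"
  using Qcarrier G.rcosetsI A_sub by auto

lemma Q_elem: "q \<in> carrier (G Mod A) \<Longrightarrow> \<exists>g\<in>carrier G. q = A #>\<^bsub>G\<^esub> g"
  by (auto simp: Qcarrier RCOSETS_def)

lemma coset_mult: "g \<in> carrier G \<Longrightarrow> h \<in> carrier G \<Longrightarrow>
   (A #>\<^bsub>G\<^esub> g) \<otimes>\<^bsub>G Mod A\<^esub> (A #>\<^bsub>G\<^esub> h) = A #>\<^bsub>G\<^esub> (g \<otimes>\<^bsub>G\<^esub> h)"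
  by (simp add: N.rcos_sum)

lemma coset_A: "a \<in> A \<Longrightarrow> A #>\<^bsub>G\<^esub> a = A"
  by (simp add: N.rcos_const grp)

lemma coset_eq: "g \<in> carrier G \<Longrightarrow> h \<in> carrier G \<Longrightarrow> A #>\<^bsub>G\<^esub> g = A #>\<^bsub>G\<^esub> h \<Longrightarrow> \<exists>a\<in>A. h = a \<otimes>\<^bsub>G\<^esub> g"
proof -
  assume g: "g \<in> carrier G" and h: "h \<in> carrier G" and e: "A #>\<^bsub>G\<^esub> g = A #>\<^bsub>G\<^esub> h"
  have "h \<in> A #>\<^bsub>G\<^esub> g" using G.rcos_self[OF h N.subgroup_axioms] e by simp
  then show ?thesis by (auto simp: r_coset_def)
qed

definition X :: "('g set \<Rightarrow> complex^'n^'n) monoid" where "X = char_group G A"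

lemma X_carrier: "carrier X = hom (G Mod A) (circle_group :: (complex^'n^'n) monoid) \<inter> extensional (carrier (G Mod A))"
  by (simp add: X_def char_group_def)
lemma X_mult: "c1 \<otimes>\<^bsub>X\<^esub> c2 = (\<lambda>q \<in> carrier (G Mod A). c1 q ** c2 q)"
  by (simp add: X_def char_group_def)
lemma X_one: "\<one>\<^bsub>X\<^esub> = (\<lambda>q \<in> carrier (G Mod A). (mat 1 :: complex^'n^'n))"
  by (simp add: X_def char_group_def)

lemma chi_val: "c \<in> carrier X \<Longrightarrow> q \<in> carrier (G Mod A) \<Longrightarrow> c q \<in> scalar_circle"
  by (auto simp: X_carrier hom_def)

lemma chi_hom: "c \<in> carrier X \<Longrightarrow> p \<in> carrier (G Mod A) \<Longrightarrow> q \<in> carrier (G Mod A) \<Longrightarrow>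
    c (p \<otimes>\<^bsub>G Mod A\<^esub> q) = c p ** c q"
  by (auto simp: X_carrier hom_def)

lemma chi_one: "c \<in> carrier X \<Longrightarrow> c A = mat 1"
proof -
  assume c: "c \<in> carrier X"
  have "c \<one>\<^bsub>G Mod A\<^esub> = \<one>\<^bsub>circle_group\<^esub>"
    using c by (intro group_hom.hom_one) (auto simp: X_carrier group_hom_def group_hom_axioms_def Qgrp circle_group_group)
  thus ?thesis by simp
qed

lemma X_group: "group X"
proof (rule groupI)
  fix x y assume x: "x \<in> carrier X" and y: "y \<in> carrier X"
  show "x \<otimes>\<^bsub>X\<^esub> y \<in> carrier X"
    unfolding X_carrier X_mult
  proof
    show "(\<lambda>q\<in>carrier (G Mod A). x q ** y q) \<in> hom (G Mod A) circle_group"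
    proof (rule homI)
      fix q assume "q \<in> carrier (G Mod A)"
      then show "(\<lambda>q\<in>carrier (G Mod A). x q ** y q) q \<in> carrier circle_group"
        using x y by (simp add: chi_val sc_mult)
    next
      fix p q assume p: "p \<in> carrier (G Mod A)" and q: "q \<in> carrier (G Mod A)"
      have pq: "p \<otimes>\<^bsub>G Mod A\<^esub> q \<in> carrier (G Mod A)" by (rule monoid.m_closed[OF group.is_monoid[OF Qgrp] p q])
      have cm: "x q ** y p = y p ** x q" using sc_comm[OF chi_val[OF x q]] .
      have "x p ** x q ** (y p ** y q) = x p ** (x q ** y p) ** y q" by (simp add: matrix_mul_assoc)
      also have "\<dots> = x p ** (y p ** x q) ** y q" by (simp only: cm)
      also have "\<dots> = x p ** y p ** (x q ** y q)" by (simp add: matrix_mul_assoc)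
      finally have "x p ** x q ** (y p ** y q) = x p ** y p ** (x q ** y q)" .
      then show "(\<lambda>q\<in>carrier (G Mod A). x q ** y q) (p \<otimes>\<^bsub>G Mod A\<^esub> q) =
        (\<lambda>q\<in>carrier (G Mod A). x q ** y q) p \<otimes>\<^bsub>circle_group\<^esub> (\<lambda>q\<in>carrier (G Mod A). x q ** y q) q"
        using p q pq x y chi_hom[OF x p q] chi_hom[OF y p q] by simp
    qed
  qed simp
next
  show "\<one>\<^bsub>X\<^esub> \<in> carrier X"
    unfolding X_one X_carrier
  proof
    show "(\<lambda>q\<in>carrier (G Mod A). (mat 1 :: complex^'n^'n)) \<in> hom (G Mod A) circle_group"
    proof (rule homI)
      fix p q assume p: "p \<in> carrier (G Mod A)" and q: "q \<in> carrier (G Mod A)"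
      have pq: "p \<otimes>\<^bsub>G Mod A\<^esub> q \<in> carrier (G Mod A)" by (rule monoid.m_closed[OF group.is_monoid[OF Qgrp] p q])
      then show "(\<lambda>q\<in>carrier (G Mod A). (mat 1 :: complex^'n^'n)) (p \<otimes>\<^bsub>G Mod A\<^esub> q) = (\<lambda>q\<in>carrier (G Mod A). mat 1) p \<otimes>\<^bsub>circle_group\<^esub> (\<lambda>q\<in>carrier (G Mod A). mat 1) q"
        using p q by simp
    qed (simp add: sc_one)
  qed simp
next
  fix x y z assume "x \<in> carrier X" "y \<in> carrier X" "z \<in> carrier X"
  show "x \<otimes>\<^bsub>X\<^esub> y \<otimes>\<^bsub>X\<^esub> z = x \<otimes>\<^bsub>X\<^esub> (y \<otimes>\<^bsub>X\<^esub> z)"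
    unfolding X_mult by (rule ext) (simp add: matrix_mul_assoc)
next
  fix x assume x: "x \<in> carrier X"
  show "\<one>\<^bsub>X\<^esub> \<otimes>\<^bsub>X\<^esub> x = x"
    unfolding X_mult X_one
  proof (rule ext)
    fix q show "(\<lambda>q\<in>carrier (G Mod A). (\<lambda>q\<in>carrier (G Mod A). mat 1) q ** x q) q = x q"
    proof (cases "q \<in> carrier (G Mod A)")
      case False
      moreover have "x q = undefined" using x False by (intro extensional_arb[of x]) (simp_all add: X_carrier)
      ultimately show ?thesis by simp
    qed simp
  qed
next
  fix x assume x: "x \<in> carrier X"
  let ?y = "\<lambda>q\<in>carrier (G Mod A). adj_mat (x q)"
  have "?y \<in> carrier X"
    unfolding X_carrier
  proof
    show "?y \<in> hom (G Mod A) circle_group"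
    proof (rule homI)
      fix q assume "q \<in> carrier (G Mod A)"
      then show "?y q \<in> carrier circle_group" using x by (simp add: chi_val sc_adj)
    next
      fix p q assume p: "p \<in> carrier (G Mod A)" and q: "q \<in> carrier (G Mod A)"
      have pq: "p \<otimes>\<^bsub>G Mod A\<^esub> q \<in> carrier (G Mod A)" by (rule monoid.m_closed[OF group.is_monoid[OF Qgrp] p q])
      have "?y (p \<otimes>\<^bsub>G Mod A\<^esub> q) = adj_mat (x p ** x q)" using pq chi_hom[OF x p q] by (simp only: restrict_apply' )
      also have "\<dots> = adj_mat (x q) ** adj_mat (x p)" by (rule adj_mult)
      also have "\<dots> = adj_mat (x p) ** adj_mat (x q)" by (rule sc_comm[OF sc_adj[OF chi_val[OF x q]]])
      also have "\<dots> = ?y p \<otimes>\<^bsub>circle_group\<^esub> ?y q" using p q by simp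
      finally show "?y (p \<otimes>\<^bsub>G Mod A\<^esub> q) = ?y p \<otimes>\<^bsub>circle_group\<^esub> ?y q" .
    qed
  qed simp
  moreover have "?y \<otimes>\<^bsub>X\<^esub> x = \<one>\<^bsub>X\<^esub>"
    unfolding X_mult X_one
  proof (rule ext)
    fix q show "(\<lambda>q\<in>carrier (G Mod A). ?y q ** x q) q = (\<lambda>q\<in>carrier (G Mod A). mat 1) q"
    proof (cases "q \<in> carrier (G Mod A)")
      case True
      then have "x q \<in> carrier unitary_group" using x chi_val sc_unitary by blast
      then show ?thesis using True by (simp add: unitary_carrier)
    qed simp
  qed
  ultimately show "\<exists>y\<in>carrier X. y \<otimes>\<^bsub>X\<^esub> x = \<one>\<^bsub>X\<^esub>" by blast
qed


lemma X_finite: "finite (carrier X)"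
proof -
  let ?m = "order (G Mod A)"
  have m: "?m > 0" using fin Qcarrier
    by (metis card_gt_0_iff empty_iff group.is_monoid Qgrp monoid.one_closed order_def)
  have "carrier X \<subseteq> PiE (carrier (G Mod A)) (\<lambda>_. mat ` {z. z ^ ?m = 1})"
  proof
    fix c assume c: "c \<in> carrier X"
    have "c q \<in> mat ` {z. z ^ ?m = 1}" if q: "q \<in> carrier (G Mod A)" for q
    proof -
      obtain z where z: "c q = mat z" using chi_val[OF c q] by (auto simp: scalar_circle_def)
      have "c (q [^]\<^bsub>G Mod A\<^esub> ?m) = c q [^]\<^bsub>circle_group\<^esub> ?m"
        using c q by (intro hom_nat_pow) (auto simp: X_carrier Qgrp circle_group_group)
      moreover have "q [^]\<^bsub>G Mod A\<^esub> ?m = A"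
        using group.pow_order_eq_1[OF Qgrp q] fin Qcarrier by simp
      ultimately have "mat (z ^ ?m) = (mat 1 :: complex^'n^'n)"
        using chi_one[OF c] z by (simp add: circle_pow)
      then show ?thesis using z mat_inj by blast
    qed
    moreover have "c \<in> extensional (carrier (G Mod A))" using c by (simp add: X_carrier)
    ultimately show "c \<in> PiE (carrier (G Mod A)) (\<lambda>_. mat ` {z. z ^ ?m = 1})"
      by (simp add: PiE_iff)
  qed
  moreover have "finite (PiE (carrier (G Mod A)) (\<lambda>_. mat ` {z::complex. z ^ ?m = 1} :: (complex^'n^'n) set))"
  proof -
    have "finite {z::complex. z ^ ?m = 1}" using m by (intro finite_roots_unity) simp
    then have "finite (mat ` {z::complex. z ^ ?m = 1} :: (complex^'n^'n) set)" by simp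
    then show ?thesis using fin Qcarrier by (intro finite_PiE) auto
  qed
  ultimately show ?thesis by (rule finite_subset)
qed

end



context ctx begin

interpretation G: group G by (rule grp)
interpretation N: normal A G by (rule nrm)
interpretation U: group "unitary_group :: (complex^'n^'n) monoid" by (rule unitary_group_group)

definition E :: "('g \<Rightarrow> complex^'n^'n) set" where "E = Hom_A_psi G A \<psi>"

lemma E_hom: "\<rho> \<in> E \<Longrightarrow> g \<in> carrier G \<Longrightarrow> h \<in> carrier G \<Longrightarrow> \<rho> (g \<otimes>\<^bsub>G\<^esub> h) = \<rho> g ** \<rho> h"
  by (auto simp: E_def Hom_A_psi_def Hom_A_def Hom_rep_def hom_def)
lemma E_U: "\<rho> \<in> E \<Longrightarrow> g \<in> carrier G \<Longrightarrow> \<rho> g \<in> carrier unitary_group"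
  by (auto simp: E_def Hom_A_psi_def Hom_A_def Hom_rep_def hom_def)
lemma E_ext: "\<rho> \<in> E \<Longrightarrow> \<rho> \<in> extensional (carrier G)"
  by (auto simp: E_def Hom_A_psi_def Hom_A_def Hom_rep_def)
lemma E_A: "\<rho> \<in> E \<Longrightarrow> a \<in> A \<Longrightarrow> \<rho> a \<in> scalar_circle"
  by (auto simp: E_def Hom_A_psi_def Hom_A_def)
lemma E_psi: "\<rho> \<in> E \<Longrightarrow> g \<in> carrier G \<Longrightarrow> \<psi> (A #>\<^bsub>G\<^esub> g) = scalar_circle #>\<^bsub>unitary_group\<^esub> \<rho> g"
  by (auto simp: E_def Hom_A_psi_def)
lemma E_intro:
  assumes "\<And>g. g \<in> carrier G \<Longrightarrow> \<rho> g \<in> carrier unitary_group"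
    and "\<And>g h. g \<in> carrier G \<Longrightarrow> h \<in> carrier G \<Longrightarrow> \<rho> (g \<otimes>\<^bsub>G\<^esub> h) = \<rho> g ** \<rho> h"
    and "\<rho> \<in> extensional (carrier G)"
    and "\<And>a. a \<in> A \<Longrightarrow> \<rho> a \<in> scalar_circle"
    and "\<And>g. g \<in> carrier G \<Longrightarrow> \<psi> (A #>\<^bsub>G\<^esub> g) = scalar_circle #>\<^bsub>unitary_group\<^esub> \<rho> g"
  shows "\<rho> \<in> E"
  using assms unfolding E_def Hom_A_psi_def Hom_A_def Hom_rep_def by (auto intro!: homI)

lemma coset_sc: "s \<in> scalar_circle \<Longrightarrow> M \<in> carrier unitary_group \<Longrightarrow>
   scalar_circle #>\<^bsub>unitary_group\<^esub> (s ** M) = scalar_circle #>\<^bsub>unitary_group\<^esub> (M :: complex^'n^'n)"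
proof -
  assume s: "s \<in> scalar_circle" and M: "M \<in> carrier unitary_group"
  have "scalar_circle #>\<^bsub>unitary_group\<^esub> (s \<otimes>\<^bsub>unitary_group\<^esub> M) = (scalar_circle #>\<^bsub>unitary_group\<^esub> s) #>\<^bsub>unitary_group\<^esub> M"
    using s M sc_unitary sc_subgroup by (subst U.coset_mult_assoc) (auto dest: subgroup.subset)
  also have "scalar_circle #>\<^bsub>unitary_group\<^esub> s = scalar_circle"
    using s sc_unitary sc_subgroup by (intro U.coset_join2) auto
  finally show ?thesis by simp
qed

definition act where "act = char_action G A E"

lemma act_eq: "\<rho> \<in> E \<Longrightarrow> act c \<rho> = (\<lambda>g\<in>carrier G. c (A #>\<^bsub>G\<^esub> g) ** \<rho> g)"
  by (simp add: act_def char_action_def)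

lemma act_in: assumes c: "c \<in> carrier X" and r: "\<rho> \<in> E"
  shows "(\<lambda>g\<in>carrier G. c (A #>\<^bsub>G\<^esub> g) ** \<rho> g) \<in> E"
proof (rule E_intro)
  fix g assume g: "g \<in> carrier G"
  have "c (A #>\<^bsub>G\<^esub> g) \<otimes>\<^bsub>unitary_group\<^esub> \<rho> g \<in> carrier unitary_group"
    using chi_val[OF c coset_in[OF g]] sc_unitary E_U[OF r g] by (intro U.m_closed) auto
  then show "(\<lambda>g\<in>carrier G. c (A #>\<^bsub>G\<^esub> g) ** \<rho> g) g \<in> carrier unitary_group" using g by simp
  show "\<psi> (A #>\<^bsub>G\<^esub> g) = scalar_circle #>\<^bsub>unitary_group\<^esub> (\<lambda>g\<in>carrier G. c (A #>\<^bsub>G\<^esub> g) ** \<rho> g) g"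
    using g E_psi[OF r g] coset_sc[OF chi_val[OF c coset_in[OF g]] E_U[OF r g]] by simp
next
  fix g h assume g: "g \<in> carrier G" and h: "h \<in> carrier G"
  have gh: "g \<otimes>\<^bsub>G\<^esub> h \<in> carrier G" using g h by simp
  have cm: "c (A #>\<^bsub>G\<^esub> h) ** \<rho> g = \<rho> g ** c (A #>\<^bsub>G\<^esub> h)"
    by (rule sc_comm[OF chi_val[OF c coset_in[OF h]]])
  have "c (A #>\<^bsub>G\<^esub> (g \<otimes>\<^bsub>G\<^esub> h)) ** \<rho> (g \<otimes>\<^bsub>G\<^esub> h) = c (A #>\<^bsub>G\<^esub> g) ** c (A #>\<^bsub>G\<^esub> h) ** (\<rho> g ** \<rho> h)"
    using chi_hom[OF c coset_in[OF g] coset_in[OF h]] coset_mult[OF g h] E_hom[OF r g h] by simp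
  also have "\<dots> = c (A #>\<^bsub>G\<^esub> g) ** (c (A #>\<^bsub>G\<^esub> h) ** \<rho> g) ** \<rho> h" by (simp add: matrix_mul_assoc)
  also have "\<dots> = c (A #>\<^bsub>G\<^esub> g) ** (\<rho> g ** c (A #>\<^bsub>G\<^esub> h)) ** \<rho> h" by (simp only: cm)
  also have "\<dots> = (c (A #>\<^bsub>G\<^esub> g) ** \<rho> g) ** (c (A #>\<^bsub>G\<^esub> h) ** \<rho> h)" by (simp add: matrix_mul_assoc)
  finally show "(\<lambda>g\<in>carrier G. c (A #>\<^bsub>G\<^esub> g) ** \<rho> g) (g \<otimes>\<^bsub>G\<^esub> h) =
      (\<lambda>g\<in>carrier G. c (A #>\<^bsub>G\<^esub> g) ** \<rho> g) g ** (\<lambda>g\<in>carrier G. c (A #>\<^bsub>G\<^esub> g) ** \<rho> g) h"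
    using g h gh by simp
next
  show "(\<lambda>g\<in>carrier G. c (A #>\<^bsub>G\<^esub> g) ** \<rho> g) \<in> extensional (carrier G)" by simp
next
  fix a assume a: "a \<in> A"
  then have "a \<in> carrier G" using A_sub by blast
  then show "(\<lambda>g\<in>carrier G. c (A #>\<^bsub>G\<^esub> g) ** \<rho> g) a \<in> scalar_circle"
    using a coset_A[OF a] chi_one[OF c] E_A[OF r a] by simp
qed

lemma act_closed: "c \<in> carrier X \<Longrightarrow> \<rho> \<in> E \<Longrightarrow> act c \<rho> \<in> E"
  using act_eq act_in by simp

lemma act_comp: assumes c1: "c1 \<in> carrier X" and c2: "c2 \<in> carrier X" and r: "\<rho> \<in> E"
  shows "act (c1 \<otimes>\<^bsub>X\<^esub> c2) \<rho> = act c1 (act c2 \<rho>)"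
proof -
  have "act c1 (act c2 \<rho>) = (\<lambda>g\<in>carrier G. c1 (A #>\<^bsub>G\<^esub> g) ** act c2 \<rho> g)"
    by (rule act_eq[OF act_closed[OF c2 r]])
  also have "\<dots> = (\<lambda>g\<in>carrier G. c1 (A #>\<^bsub>G\<^esub> g) ** (c2 (A #>\<^bsub>G\<^esub> g) ** \<rho> g))"
    by (rule restrict_ext) (simp add: act_eq[OF r])
  also have "\<dots> = act (c1 \<otimes>\<^bsub>X\<^esub> c2) \<rho>"
    unfolding act_eq[OF r] X_mult by (rule restrict_ext) (simp add: coset_in matrix_mul_assoc)
  finally show ?thesis by simp
qed

lemma act_one: assumes r: "\<rho> \<in> E" shows "act \<one>\<^bsub>X\<^esub> \<rho> = \<rho>"
proof -
  have "act \<one>\<^bsub>X\<^esub> \<rho> = (\<lambda>g\<in>carrier G. \<rho> g)"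
    unfolding act_eq[OF r] X_one by (rule restrict_ext) (simp add: coset_in)
  also have "\<dots> = \<rho>" using E_ext[OF r] by (simp add: extensional_restrict)
  finally show ?thesis .
qed

lemma action: "group_action X E act"
proof -
  interpret XG: group X by (rule X_group)
  have bij: "act c \<in> Bij E" if c: "c \<in> carrier X" for c
  proof -
    have "bij_betw (act c) E E"
    proof (rule bij_betw_byWitness[where f' = "act (inv\<^bsub>X\<^esub> c)"])
      show "\<forall>a\<in>E. act (inv\<^bsub>X\<^esub> c) (act c a) = a"
        using c by (auto simp: act_comp[symmetric] act_one)
      show "\<forall>a\<in>E. act c (act (inv\<^bsub>X\<^esub> c) a) = a"
        using c by (auto simp: act_comp[symmetric] act_one)
      show "act c ` E \<subseteq> E" using c act_closed by auto
      show "act (inv\<^bsub>X\<^esub> c) ` E \<subseteq> E" using c act_closed by auto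
    qed
    moreover have "act c \<in> extensional E" by (simp add: act_def char_action_def)
    ultimately show ?thesis by (simp add: Bij_def)
  qed
  have "act \<in> hom X (BijGroup E)"
  proof (rule homI)
    fix c assume "c \<in> carrier X" then show "act c \<in> carrier (BijGroup E)"
      using bij by (simp add: BijGroup_def)
  next
    fix c1 c2 assume c1: "c1 \<in> carrier X" and c2: "c2 \<in> carrier X"
    have "act (c1 \<otimes>\<^bsub>X\<^esub> c2) = compose E (act c1) (act c2)"
    proof (rule ext)
      fix \<rho> show "act (c1 \<otimes>\<^bsub>X\<^esub> c2) \<rho> = compose E (act c1) (act c2) \<rho>"
      proof (cases "\<rho> \<in> E")
        case True then show ?thesis using act_comp[OF c1 c2 True] by (simp add: compose_def)
      qed (simp add: compose_def act_def char_action_def)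
    qed
    then show "act (c1 \<otimes>\<^bsub>X\<^esub> c2) = act c1 \<otimes>\<^bsub>BijGroup E\<^esub> act c2"
      using bij c1 c2 by (simp add: BijGroup_def)
  qed
  then show ?thesis
    unfolding group_action_def group_hom_def group_hom_axioms_def
    using X_group group_BijGroup by blast
qed

lemma free: "c \<in> carrier X \<Longrightarrow> \<rho> \<in> E \<Longrightarrow> act c \<rho> = \<rho> \<Longrightarrow> c = \<one>\<^bsub>X\<^esub>"
proof -
  assume c: "c \<in> carrier X" and r: "\<rho> \<in> E" and e: "act c \<rho> = \<rho>"
  show "c = \<one>\<^bsub>X\<^esub>" unfolding X_one
  proof (rule ext)
    fix q show "c q = (\<lambda>q\<in>carrier (G Mod A). mat 1) q"
    proof (cases "q \<in> carrier (G Mod A)")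
      case True
      then obtain g where g: "g \<in> carrier G" and q: "q = A #>\<^bsub>G\<^esub> g" using Q_elem by blast
      have "act c \<rho> g = \<rho> g" using e by simp
      then have "c q ** \<rho> g = \<rho> g" using g q by (simp add: act_eq[OF r])
      then have "c q = mat 1" using sc_cancel chi_val[OF c True] E_U[OF r g] by blast
      then show ?thesis using True by simp
    next
      case False
      have "c q = undefined" using c False by (intro extensional_arb[of c]) (simp_all add: X_carrier)
      then show ?thesis using False by simp
    qed
  qed
qed

end



context ctx begin

interpretation G: group G by (rule grp)
interpretation N: normal A G by (rule nrm)
interpretation U: group "unitary_group :: (complex^'n^'n) monoid" by (rule unitary_group_group)

lemma R_image: "\<rho> \<in> E \<Longrightarrow> restrict \<rho> A \<in> Hom_circle G A"
  unfolding Hom_circle_def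
proof
  assume r: "\<rho> \<in> E"
  show "restrict \<rho> A \<in> hom (G\<lparr>carrier := A\<rparr>) circle_group"
  proof (rule homI)
    fix a assume "a \<in> carrier (G\<lparr>carrier := A\<rparr>)"
    then show "restrict \<rho> A a \<in> carrier circle_group" using E_A[OF r] by simp
  next
    fix a b assume a: "a \<in> carrier (G\<lparr>carrier := A\<rparr>)" and b: "b \<in> carrier (G\<lparr>carrier := A\<rparr>)"
    then have "a \<in> A" "b \<in> A" by auto
    moreover have "a \<otimes>\<^bsub>G\<^esub> b \<in> A" using \<open>a \<in> A\<close> \<open>b \<in> A\<close> by (simp add: N.m_closed)
    ultimately show "restrict \<rho> A (a \<otimes>\<^bsub>G\<lparr>carrier := A\<rparr>\<^esub> b) = restrict \<rho> A a \<otimes>\<^bsub>circle_group\<^esub> restrict \<rho> A b"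
      using E_hom[OF r] A_sub by auto
  qed
qed simp

lemma act_restrict: "c \<in> carrier X \<Longrightarrow> \<rho> \<in> E \<Longrightarrow> restrict (act c \<rho>) A = restrict \<rho> A"
proof -
  assume c: "c \<in> carrier X" and r: "\<rho> \<in> E"
  show ?thesis
  proof (rule restrict_ext)
    fix a assume a: "a \<in> A"
    then have "a \<in> carrier G" using A_sub by blast
    then show "act c \<rho> a = \<rho> a" using a coset_A[OF a] chi_one[OF c] by (simp add: act_eq[OF r])
  qed
qed

lemma fiber_sub: assumes r: "\<rho> \<in> E" and r': "\<rho>' \<in> E" and eq: "restrict \<rho>' A = restrict \<rho> A"
  shows "\<exists>c\<in>carrier X. act c \<rho> = \<rho>'"
proof -
  define d where "d g = \<rho>' g ** adj_mat (\<rho> g)" for g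
  have rA: "\<rho>' a = \<rho> a" if "a \<in> A" for a
    using fun_cong[OF eq, of a] that by simp
  have adjr: "\<rho> g ** adj_mat (\<rho> g) = mat 1" "adj_mat (\<rho> g) ** \<rho> g = mat 1" if "g \<in> carrier G" for g
    using E_U[OF r that] by (simp_all add: unitary_carrier)
  have dS: "d g \<in> scalar_circle" if g: "g \<in> carrier G" for g
  proof -
    have "\<rho>' g \<in> scalar_circle #>\<^bsub>unitary_group\<^esub> \<rho>' g"
      by (rule U.rcos_self[OF E_U[OF r' g] sc_subgroup])
    also have "\<dots> = scalar_circle #>\<^bsub>unitary_group\<^esub> \<rho> g"
      using E_psi[OF r g] E_psi[OF r' g] by simp
    finally obtain s where s: "s \<in> scalar_circle" and e: "\<rho>' g = s ** \<rho> g"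
      by (auto simp: r_coset_def)
    have "d g = s ** (\<rho> g ** adj_mat (\<rho> g))" by (simp add: d_def e matrix_mul_assoc)
    then show ?thesis using s adjr[OF g] by simp
  qed
  have d_coset: "d (a \<otimes>\<^bsub>G\<^esub> g) = d g" if a: "a \<in> A" and g: "g \<in> carrier G" for a g
  proof -
    have aG: "a \<in> carrier G" using a A_sub by blast
    have "d (a \<otimes>\<^bsub>G\<^esub> g) = \<rho> a ** (\<rho>' g ** adj_mat (\<rho> g)) ** adj_mat (\<rho> a)"
      by (simp add: d_def E_hom[OF r aG g] E_hom[OF r' aG g] rA[OF a] adj_mult matrix_mul_assoc)
    also have "\<dots> = d g ** (\<rho> a ** adj_mat (\<rho> a))"
      using sc_comm[OF dS[OF g], of "\<rho> a"] by (simp add: d_def matrix_mul_assoc)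
    also have "\<dots> = d g" using adjr[OF aG] by simp
    finally show ?thesis .
  qed
  have d_mult: "d (g \<otimes>\<^bsub>G\<^esub> h) = d g ** d h" if g: "g \<in> carrier G" and h: "h \<in> carrier G" for g h
  proof -
    have "d (g \<otimes>\<^bsub>G\<^esub> h) = \<rho>' g ** d h ** adj_mat (\<rho> g)"
      by (simp add: d_def E_hom[OF r g h] E_hom[OF r' g h] adj_mult matrix_mul_assoc)
    also have "\<dots> = d h ** d g"
      using sc_comm[OF dS[OF h], of "\<rho>' g"] by (simp add: d_def matrix_mul_assoc)
    also have "\<dots> = d g ** d h" by (rule sc_comm[OF dS[OF h]])
    finally show ?thesis .
  qed
  define rep where "rep q = (SOME g. g \<in> carrier G \<and> q = A #>\<^bsub>G\<^esub> g)" for q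
  have rep: "rep q \<in> carrier G \<and> q = A #>\<^bsub>G\<^esub> rep q" if "q \<in> carrier (G Mod A)" for q
    unfolding rep_def using Q_elem[OF that] by (rule someI2_bex) auto
  define c where "c = (\<lambda>q\<in>carrier (G Mod A). d (rep q))"
  have c_coset: "c (A #>\<^bsub>G\<^esub> g) = d g" if g: "g \<in> carrier G" for g
  proof -
    have q: "A #>\<^bsub>G\<^esub> g \<in> carrier (G Mod A)" by (rule coset_in[OF g])
    from rep[OF q] obtain a where a: "a \<in> A" and ga: "g = a \<otimes>\<^bsub>G\<^esub> rep (A #>\<^bsub>G\<^esub> g)"
      using coset_eq[of "rep (A #>\<^bsub>G\<^esub> g)" g] g by metis
    have "c (A #>\<^bsub>G\<^esub> g) = d (rep (A #>\<^bsub>G\<^esub> g))" using q by (simp add: c_def)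
    also have "\<dots> = d g" using d_coset[OF a] rep[OF q] ga by metis
    finally show ?thesis .
  qed
  have cX: "c \<in> carrier X"
    unfolding X_carrier
  proof
    show "c \<in> hom (G Mod A) circle_group"
    proof (rule homI)
      fix q assume q: "q \<in> carrier (G Mod A)"
      then show "c q \<in> carrier circle_group" using rep[OF q] dS by (simp add: c_def)
    next
      fix p q assume p: "p \<in> carrier (G Mod A)" and q: "q \<in> carrier (G Mod A)"
      obtain g where g: "g \<in> carrier G" and pg: "p = A #>\<^bsub>G\<^esub> g" using Q_elem[OF p] by blast
      obtain h where h: "h \<in> carrier G" and qh: "q = A #>\<^bsub>G\<^esub> h" using Q_elem[OF q] by blast
      have "c (p \<otimes>\<^bsub>G Mod A\<^esub> q) = c (A #>\<^bsub>G\<^esub> (g \<otimes>\<^bsub>G\<^esub> h))" using coset_mult[OF g h] pg qh by simp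
      also have "\<dots> = d g ** d h" using c_coset[of "g \<otimes>\<^bsub>G\<^esub> h"] d_mult[OF g h] g h by simp
      also have "\<dots> = c p \<otimes>\<^bsub>circle_group\<^esub> c q" using c_coset[OF g] c_coset[OF h] pg qh by simp
      finally show "c (p \<otimes>\<^bsub>G Mod A\<^esub> q) = c p \<otimes>\<^bsub>circle_group\<^esub> c q" .
    qed
  qed (simp add: c_def)
  have "act c \<rho> = \<rho>'"
  proof (rule ext)
    fix g show "act c \<rho> g = \<rho>' g"
    proof (cases "g \<in> carrier G")
      case True
      have "act c \<rho> g = \<rho>' g ** (adj_mat (\<rho> g) ** \<rho> g)"
        using True by (simp add: act_eq[OF r] c_coset d_def matrix_mul_assoc)
      then show ?thesis using adjr[OF True] by simp
    next
      case False
      have "\<rho>' g = undefined" using E_ext[OF r'] False by (rule extensional_arb)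
      then show ?thesis using False by (simp add: act_eq[OF r])
    qed
  qed
  then show ?thesis using cX by blast
qed

lemma fibers: "\<rho> \<in> E \<Longrightarrow> {\<rho>' \<in> E. restrict \<rho>' A = restrict \<rho> A} = orbit X act \<rho>"
proof -
  assume r: "\<rho> \<in> E"
  show ?thesis
  proof
    show "{\<rho>' \<in> E. restrict \<rho>' A = restrict \<rho> A} \<subseteq> orbit X act \<rho>"
      using fiber_sub[OF r] by (auto simp: orbit_def)
    show "orbit X act \<rho> \<subseteq> {\<rho>' \<in> E. restrict \<rho>' A = restrict \<rho> A}"
      using act_closed[OF _ r] act_restrict[OF _ r] by (auto simp: orbit_def)
  qed
qed

end



lemma cont_mm: "continuous_on UNIV (\<lambda>p::(complex^'n^'n) \<times> (complex^'n^'n). fst p ** snd p)"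
  unfolding matrix_matrix_mult_def
  by (intro continuous_intros)

lemma cont_adj: "continuous_on UNIV (adj_mat :: complex^'n^'n \<Rightarrow> complex^'n^'n)"
  unfolding adj_mat_def[abs_def]
  by (intro continuous_intros)

lemma cont_lmul: "continuous_on UNIV (\<lambda>x::complex^'n^'n. M ** x)"
  unfolding matrix_matrix_mult_def by (intro continuous_intros)

lemma cont_rmul: "continuous_on UNIV (\<lambda>x::complex^'n^'n. x ** M)"
  unfolding matrix_matrix_mult_def by (intro continuous_intros)

lemma cont_mat: "continuous_on UNIV (mat :: complex \<Rightarrow> complex^'n^'n)"
  unfolding mat_def[abs_def]
proof (intro continuous_on_vec_lambda)
  fix i j :: 'n
  show "continuous_on UNIV (\<lambda>k::complex. if i = j then k else 0)"
    by (cases "i = j") (simp_all add: continuous_on_id continuous_on_const)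
qed

lemma compact_sc: "compact (scalar_circle :: (complex^'n^'n) set)"
proof -
  have "scalar_circle = (mat :: complex \<Rightarrow> complex^'n^'n) ` sphere 0 1"
    by (auto simp: scalar_circle_def)
  moreover have "compact ((mat :: complex \<Rightarrow> complex^'n^'n) ` sphere 0 1)"
    by (rule compact_continuous_image[OF continuous_on_subset[OF cont_mat] compact_sphere]) simp
  ultimately show ?thesis by (simp only:)
qed

lemma closed_U: "closed (carrier (unitary_group :: (complex^'n^'n) monoid))"
proof -
  have p1: "continuous_on UNIV (\<lambda>M::complex^'n^'n. (M, adj_mat M))"
    by (intro continuous_on_Pair continuous_on_id cont_adj)
  have p2: "continuous_on UNIV (\<lambda>M::complex^'n^'n. (adj_mat M, M))"
    by (intro continuous_on_Pair continuous_on_id cont_adj)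
  have c1: "continuous_on UNIV (\<lambda>M::complex^'n^'n. M ** adj_mat M)"
    using continuous_on_compose2[OF cont_mm p1] by simp
  have c2: "continuous_on UNIV (\<lambda>M::complex^'n^'n. adj_mat M ** M)"
    using continuous_on_compose2[OF cont_mm p2] by simp
  have "carrier (unitary_group :: (complex^'n^'n) monoid) =
     {M. M ** adj_mat M = mat 1} \<inter> {M. adj_mat M ** M = mat 1}"
    by (auto simp: unitary_carrier)
  then show ?thesis
    using closed_Collect_eq[OF c1 continuous_on_const] closed_Collect_eq[OF c2 continuous_on_const]
    by (simp add: closed_Int)
qed

lemma unitary_row: assumes M: "M \<in> carrier (unitary_group :: (complex^'n^'n) monoid)"
  shows "(\<Sum>j\<in>UNIV. (cmod (M$i$j))\<^sup>2) = 1"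
proof -
  have "(M ** adj_mat M) $ i $ i = 1" using M by (simp add: unitary_carrier mat_def)
  then have "(\<Sum>j\<in>UNIV. M$i$j * cnj (M$i$j)) = 1"
    by (simp add: matrix_matrix_mult_def adj_mat_def)
  moreover have "M$i$j * cnj (M$i$j) = complex_of_real ((cmod (M$i$j))\<^sup>2)" for j
    by (simp only: complex_norm_square)
  ultimately have "complex_of_real (\<Sum>j\<in>UNIV. (cmod (M$i$j))\<^sup>2) = complex_of_real 1"
    by (simp only: of_real_sum of_real_1)
  then show ?thesis using of_real_eq_iff by blast
qed

lemma norm_unitary: assumes M: "M \<in> carrier (unitary_group :: (complex^'n^'n) monoid)"
  shows "norm M = sqrt (real CARD('n))"
proof -
  have r: "norm (M $ i) = 1" for i
    using unitary_row[OF M, of i] unfolding norm_vec_def[of "M $ i"] L2_set_def by simp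
  show ?thesis unfolding norm_vec_def[of M] L2_set_def by (simp add: r)
qed

lemma compact_U: "compact (carrier (unitary_group :: (complex^'n^'n) monoid))"
proof -
  have "bounded (carrier (unitary_group :: (complex^'n^'n) monoid))"
    unfolding bounded_iff by (intro exI[of _ "sqrt (real CARD('n))"] ballI) (simp add: norm_unitary)
  then show ?thesis using closed_U compact_eq_bounded_closed by blast
qed

lemma compact_coset: "M \<in> carrier unitary_group \<Longrightarrow>
   compact (scalar_circle #>\<^bsub>unitary_group\<^esub> (M :: complex^'n^'n))"
proof -
  have "scalar_circle #>\<^bsub>unitary_group\<^esub> M = (\<lambda>s. s ** M) ` scalar_circle"
    unfolding r_coset_def by auto
  moreover have "compact ((\<lambda>s. s ** M) ` (scalar_circle :: (complex^'n^'n) set))"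
    by (rule compact_continuous_image[OF continuous_on_subset[OF cont_rmul] compact_sc]) simp
  ultimately show ?thesis by (simp only:)
qed




lemma closedin_all: "(\<And>i. i \<in> I \<Longrightarrow> closedin X {x \<in> topspace X. P i x}) \<Longrightarrow> closedin X {x \<in> topspace X. \<forall>i\<in>I. P i x}"
proof (cases "I = {}")
  case False
  assume h: "\<And>i. i \<in> I \<Longrightarrow> closedin X {x \<in> topspace X. P i x}"
  have "{x \<in> topspace X. \<forall>i\<in>I. P i x} = \<Inter>((\<lambda>i. {x \<in> topspace X. P i x}) ` I)" using False by auto
  then show ?thesis using h False by (auto intro!: closedin_Inter)
qed simp

lemma openin_all: "finite I \<Longrightarrow> (\<And>i. i \<in> I \<Longrightarrow> openin X {x \<in> topspace X. P i x}) \<Longrightarrow> openin X {x \<in> topspace X. \<forall>i\<in>I. P i x}"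
proof (cases "I = {}")
  case False
  assume f: "finite I" and h: "\<And>i. i \<in> I \<Longrightarrow> openin X {x \<in> topspace X. P i x}"
  have "{x \<in> topspace X. \<forall>i\<in>I. P i x} = \<Inter>((\<lambda>i. {x \<in> topspace X. P i x}) ` I)" using False by auto
  then show ?thesis using h False f by (auto intro!: openin_Inter)
qed simp

lemma coll4: "{x\<in>T. P x \<and> Q x \<and> R x \<and> S x} = {x\<in>T. P x} \<inter> {x\<in>T. Q x} \<inter> {x\<in>T. R x} \<inter> {x\<in>T. S x}"
  by auto

lemma top_pw: "topspace (pointwise_top I :: ('i \<Rightarrow> 'a::topological_space) topology) = extensional I"
  by (auto simp: pointwise_top_def PiE_def)

lemma proj_cont: "i \<in> I \<Longrightarrow> continuous_map (pointwise_top I) euclidean (\<lambda>f. f i)"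
  unfolding pointwise_top_def by (rule continuous_map_product_projection)

lemma cont_map_mm:
  assumes f: "continuous_map X euclidean f" and g: "continuous_map X euclidean g"
  shows "continuous_map X euclidean (\<lambda>x. (f x :: complex^'n^'n) ** (g x :: complex^'n^'n))"
proof -
  have "continuous_map X (prod_topology euclidean euclidean) (\<lambda>x. (f x, g x))"
    by (rule continuous_map_pairedI[OF f g])
  then have p: "continuous_map X euclidean (\<lambda>x. (f x, g x))" by simp
  have m: "continuous_map euclidean euclidean (\<lambda>p::(complex^'n^'n) \<times> (complex^'n^'n). fst p ** snd p)"
    using cont_mm by simp
  show ?thesis using continuous_map_compose[OF p m] by (simp add: o_def)
qed

lemma pw_cont_iff: "continuous_map X (pointwise_top I) f \<longleftrightarrow>
   f ` topspace X \<subseteq> extensional I \<and> (\<forall>k\<in>I. continuous_map X euclidean (\<lambda>x. f x k))"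
  unfolding pointwise_top_def by (rule continuous_map_componentwise)

lemma Hausdorff_pw: "Hausdorff_space (pointwise_top I :: ('i \<Rightarrow> 'a::metric_space) topology)"
  unfolding pointwise_top_def by (simp add: Hausdorff_space_product_topology)

context ctx begin

interpretation G: group G by (rule grp)
interpretation N: normal A G by (rule nrm)
interpretation U: group "unitary_group :: (complex^'n^'n) monoid" by (rule unitary_group_group)

abbreviation P :: "('g \<Rightarrow> complex^'n^'n) topology" where "P \<equiv> pointwise_top (carrier G)"
abbreviation XT :: "('g \<Rightarrow> complex^'n^'n) topology" where "XT \<equiv> subtopology P E"
definition Rm where "Rm = (\<lambda>\<rho>\<in>E. restrict \<rho> A)"
abbreviation YT :: "('g \<Rightarrow> complex^'n^'n) topology" where "YT \<equiv> subtopology (pointwise_top A) (Rm ` E)"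

lemma E_sub: "E \<subseteq> topspace P" using E_ext by (auto simp: top_pw)
lemma top_XT: "topspace XT = E" using E_sub by auto
lemma top_YT: "topspace YT = Rm ` E" by (auto simp: top_pw Rm_def)

lemma psi_coset: "g \<in> carrier G \<Longrightarrow> \<exists>M \<in> carrier unitary_group. \<psi> (A #>\<^bsub>G\<^esub> g) = scalar_circle #>\<^bsub>unitary_group\<^esub> M"
proof -
  assume g: "g \<in> carrier G"
  have "\<psi> (A #>\<^bsub>G\<^esub> g) \<in> carrier proj_unitary_group"
    using psi coset_in[OF g] by (simp add: hom_def Pi_def)
  then show ?thesis by (auto simp: proj_unitary_group_def FactGroup_def RCOSETS_def)
qed

lemma psi_cond: assumes g: "g \<in> carrier G" and x: "x \<in> carrier unitary_group"
  shows "\<psi> (A #>\<^bsub>G\<^esub> g) = scalar_circle #>\<^bsub>unitary_group\<^esub> x \<longleftrightarrow> x \<in> \<psi> (A #>\<^bsub>G\<^esub> g)"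
proof -
  obtain M where M: "M \<in> carrier unitary_group" and e: "\<psi> (A #>\<^bsub>G\<^esub> g) = scalar_circle #>\<^bsub>unitary_group\<^esub> M"
    using psi_coset[OF g] by blast
  show ?thesis
  proof
    assume "\<psi> (A #>\<^bsub>G\<^esub> g) = scalar_circle #>\<^bsub>unitary_group\<^esub> x"
    then show "x \<in> \<psi> (A #>\<^bsub>G\<^esub> g)" using U.rcos_self[OF x sc_subgroup] by simp
  next
    assume "x \<in> \<psi> (A #>\<^bsub>G\<^esub> g)"
    then show "\<psi> (A #>\<^bsub>G\<^esub> g) = scalar_circle #>\<^bsub>unitary_group\<^esub> x"
      using e U.repr_independence[OF _ M sc_subgroup] by simp
  qed
qed

lemma E_char: "E = {\<rho> \<in> topspace P. (\<forall>g\<in>carrier G. \<rho> g \<in> carrier unitary_group)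
    \<and> (\<forall>g\<in>carrier G. \<forall>h\<in>carrier G. \<rho> (g \<otimes>\<^bsub>G\<^esub> h) = \<rho> g ** \<rho> h)
    \<and> (\<forall>a\<in>A. \<rho> a \<in> scalar_circle) \<and> (\<forall>g\<in>carrier G. \<rho> g \<in> \<psi> (A #>\<^bsub>G\<^esub> g))}"
  (is "E = ?S")
proof
  show "E \<subseteq> ?S"
  proof
    fix \<rho> assume r: "\<rho> \<in> E"
    have "\<rho> \<in> topspace P" using E_sub r by blast
    moreover have "\<forall>g\<in>carrier G. \<rho> g \<in> carrier unitary_group" using E_U[OF r] by blast
    moreover have "\<forall>g\<in>carrier G. \<forall>h\<in>carrier G. \<rho> (g \<otimes>\<^bsub>G\<^esub> h) = \<rho> g ** \<rho> h" using E_hom[OF r] by blast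
    moreover have "\<forall>a\<in>A. \<rho> a \<in> scalar_circle" using E_A[OF r] by blast
    moreover have "\<forall>g\<in>carrier G. \<rho> g \<in> \<psi> (A #>\<^bsub>G\<^esub> g)"
    proof
      fix g assume g: "g \<in> carrier G"
      show "\<rho> g \<in> \<psi> (A #>\<^bsub>G\<^esub> g)" using psi_cond[OF g E_U[OF r g]] E_psi[OF r g] by simp
    qed
    ultimately show "\<rho> \<in> ?S" by simp
  qed
  show "?S \<subseteq> E"
  proof
    fix \<rho> assume r: "\<rho> \<in> ?S"
    show "\<rho> \<in> E"
    proof (rule E_intro)
      show "\<rho> \<in> extensional (carrier G)" using r by (simp add: top_pw)
      fix g assume g: "g \<in> carrier G"
      show U: "\<rho> g \<in> carrier unitary_group" using r g by simp
      show "\<psi> (A #>\<^bsub>G\<^esub> g) = scalar_circle #>\<^bsub>unitary_group\<^esub> \<rho> g"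
        using psi_cond[OF g U] r g by simp
    next
      fix g h assume "g \<in> carrier G" "h \<in> carrier G"
      then show "\<rho> (g \<otimes>\<^bsub>G\<^esub> h) = \<rho> g ** \<rho> h" using r by simp
    next
      fix a assume "a \<in> A" then show "\<rho> a \<in> scalar_circle" using r by simp
    qed
  qed
qed

lemma closed_E: "closedin P E"
proof -
  let ?Q1 = "\<lambda>g \<rho>. \<rho> g \<in> carrier (unitary_group :: (complex^'n^'n) monoid)"
  let ?Q2 = "\<lambda>g \<rho>. \<forall>h\<in>carrier G. \<rho> (g \<otimes>\<^bsub>G\<^esub> h) = \<rho> g ** \<rho> h"
  let ?Q3 = "\<lambda>a \<rho>. \<rho> a \<in> (scalar_circle :: (complex^'n^'n) set)"
  let ?Q4 = "\<lambda>g \<rho>. \<rho> g \<in> \<psi> (A #>\<^bsub>G\<^esub> g)"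
  have c1: "closedin P {\<rho> \<in> topspace P. \<forall>g\<in>carrier G. ?Q1 g \<rho>}"
  proof (rule closedin_all)
    fix g assume g: "g \<in> carrier G"
    show "closedin P {\<rho> \<in> topspace P. ?Q1 g \<rho>}"
    proof -
      have "closedin euclidean (carrier (unitary_group :: (complex^'n^'n) monoid))"
        using closed_U closed_closedin by blast
      then show ?thesis by (rule closedin_continuous_map_preimage[OF proj_cont[OF g]])
    qed
  qed
  have c2: "closedin P {\<rho> \<in> topspace P. \<forall>g\<in>carrier G. ?Q2 g \<rho>}"
  proof (rule closedin_all)
    fix g assume g: "g \<in> carrier G"
    show "closedin P {\<rho> \<in> topspace P. ?Q2 g \<rho>}"
    proof (rule closedin_all)
      fix h assume h: "h \<in> carrier G"
      show "closedin P {\<rho> \<in> topspace P. \<rho> (g \<otimes>\<^bsub>G\<^esub> h) = \<rho> g ** \<rho> h}"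
        by (rule closedin_continuous_maps_eq[OF Hausdorff_space_euclidean proj_cont cont_map_mm[OF proj_cont proj_cont]])
          (use g h in auto)
    qed
  qed
  have c3: "closedin P {\<rho> \<in> topspace P. \<forall>a\<in>A. ?Q3 a \<rho>}"
  proof (rule closedin_all)
    fix a assume a: "a \<in> A"
    then have "a \<in> carrier G" using A_sub by blast
    then show "closedin P {\<rho> \<in> topspace P. ?Q3 a \<rho>}"
    proof -
      assume aG: "a \<in> carrier G"
      have "closedin euclidean (scalar_circle :: (complex^'n^'n) set)"
        using compact_sc compact_imp_closed closed_closedin by blast
      then show ?thesis by (rule closedin_continuous_map_preimage[OF proj_cont[OF aG]])
    qed
  qed
  have c4: "closedin P {\<rho> \<in> topspace P. \<forall>g\<in>carrier G. ?Q4 g \<rho>}"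
  proof (rule closedin_all)
    fix g assume g: "g \<in> carrier G"
    obtain M where M: "M \<in> carrier unitary_group" and e: "\<psi> (A #>\<^bsub>G\<^esub> g) = scalar_circle #>\<^bsub>unitary_group\<^esub> M"
      using psi_coset[OF g] by blast
    have "closed (\<psi> (A #>\<^bsub>G\<^esub> g))" using e compact_coset[OF M] compact_imp_closed by simp
    then have "closedin euclidean (\<psi> (A #>\<^bsub>G\<^esub> g))" using closed_closedin by blast
    then show "closedin P {\<rho> \<in> topspace P. ?Q4 g \<rho>}"
      by (rule closedin_continuous_map_preimage[OF proj_cont[OF g]])
  qed
  have "E = {\<rho> \<in> topspace P. \<forall>g\<in>carrier G. ?Q1 g \<rho>} \<inter> {\<rho> \<in> topspace P. \<forall>g\<in>carrier G. ?Q2 g \<rho>}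
     \<inter> {\<rho> \<in> topspace P. \<forall>a\<in>A. ?Q3 a \<rho>} \<inter> {\<rho> \<in> topspace P. \<forall>g\<in>carrier G. ?Q4 g \<rho>}"
    by (subst E_char) (rule coll4)
  then show ?thesis using c1 c2 c3 c4 by (simp add: closedin_Int)
qed

lemma compact_XT: "compact_space XT"
proof -
  have "compactin P (PiE (carrier G) (\<lambda>_. carrier (unitary_group :: (complex^'n^'n) monoid)))"
    unfolding pointwise_top_def by (simp add: compactin_PiE compact_U)
  moreover have "E \<subseteq> PiE (carrier G) (\<lambda>_. carrier (unitary_group :: (complex^'n^'n) monoid))"
  proof (intro subsetI PiE_I)
    fix \<rho> x assume "\<rho> \<in> E" "x \<in> carrier G" then show "\<rho> x \<in> carrier unitary_group" by (rule E_U)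
  next
    fix \<rho> x assume "\<rho> \<in> E" "x \<notin> carrier G" then show "\<rho> x = undefined" using E_ext extensional_arb by metis
  qed
  ultimately have "compactin P E" using closed_compactin closed_E by blast
  then show ?thesis by (rule compact_space_subtopology)
qed

lemma Hausdorff_XT: "Hausdorff_space XT"
  by (intro Hausdorff_space_subtopology Hausdorff_pw)
lemma Hausdorff_YT: "Hausdorff_space YT"
  by (intro Hausdorff_space_subtopology Hausdorff_pw)

lemma Rm_cont: "continuous_map XT YT Rm"
proof -
  have "continuous_map XT (pointwise_top A) Rm"
    unfolding pw_cont_iff
  proof
    show "Rm ` topspace XT \<subseteq> extensional A" by (auto simp: Rm_def top_XT)
    show "\<forall>k\<in>A. continuous_map XT euclidean (\<lambda>x. Rm x k)"
    proof
      fix a assume a: "a \<in> A"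
      then have aG: "a \<in> carrier G" using A_sub by blast
      have "continuous_map XT euclidean (\<lambda>x. x a)"
        by (rule continuous_map_from_subtopology[OF proj_cont[OF aG]])
      then show "continuous_map XT euclidean (\<lambda>x. Rm x a)"
        by (rule continuous_map_eq) (use a in \<open>simp add: Rm_def top_XT\<close>)
    qed
  qed
  then show ?thesis by (simp add: continuous_map_in_subtopology top_XT)
qed

lemma act_cont: assumes c: "c \<in> carrier X" shows "continuous_map XT XT (act c)"
proof -
  have "continuous_map XT P (\<lambda>\<rho>. \<lambda>g\<in>carrier G. c (A #>\<^bsub>G\<^esub> g) ** \<rho> g)"
    unfolding pw_cont_iff
  proof
    show "(\<lambda>\<rho>. \<lambda>g\<in>carrier G. c (A #>\<^bsub>G\<^esub> g) ** \<rho> g) ` topspace XT \<subseteq> extensional (carrier G)" by auto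
    show "\<forall>k\<in>carrier G. continuous_map XT euclidean (\<lambda>x. (\<lambda>g\<in>carrier G. c (A #>\<^bsub>G\<^esub> g) ** x g) k)"
    proof
      fix g assume g: "g \<in> carrier G"
      have "continuous_map XT euclidean (\<lambda>x. c (A #>\<^bsub>G\<^esub> g) ** x g)"
        by (rule cont_map_mm[OF continuous_map_const[THEN iffD2] continuous_map_from_subtopology[OF proj_cont[OF g]]]) simp
      then show "continuous_map XT euclidean (\<lambda>x. (\<lambda>g\<in>carrier G. c (A #>\<^bsub>G\<^esub> g) ** x g) g)"
        using g by simp
    qed
  qed
  then have "continuous_map XT P (act c)"
    by (rule continuous_map_eq) (simp add: top_XT act_eq)
  then show ?thesis using act_closed[OF c] by (auto simp: continuous_map_in_subtopology top_XT)
qed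

end



context ctx begin

interpretation XG: group X by (rule X_group)
interpretation GA: group_action X E act by (rule action)

abbreviation Orbs where "Orbs \<equiv> orbits X E act"

lemma Rm_E: "\<rho> \<in> E \<Longrightarrow> Rm \<rho> = restrict \<rho> A" by (simp add: Rm_def)

lemma orb_fiber: assumes r: "\<rho> \<in> E" shows "orbit X act \<rho> = {x\<in>E. Rm x = Rm \<rho>}"
proof -
  have "{x\<in>E. Rm x = Rm \<rho>} = {\<rho>'\<in>E. restrict \<rho>' A = restrict \<rho> A}" using r by (auto simp: Rm_E)
  then show ?thesis using fibers[OF r] by simp
qed

lemma orb_self: "\<rho> \<in> E \<Longrightarrow> \<rho> \<in> orbit X act \<rho>"
  using orb_fiber by simp

lemma orb_mem: assumes Ob: "Ob \<in> Orbs" and x: "x \<in> Ob" shows "x \<in> E \<and> Ob = orbit X act x"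
proof -
  obtain \<rho> where r: "\<rho> \<in> E" and Oe: "Ob = orbit X act \<rho>" using Ob by (auto simp: orbits_def)
  have xE: "x \<in> E" and xr: "Rm x = Rm \<rho>" using x Oe orb_fiber[OF r] by auto
  have "orbit X act x = orbit X act \<rho>" using orb_fiber[OF r] orb_fiber[OF xE] xr by simp
  then show ?thesis using xE Oe by simp
qed

lemma orb_in: "\<rho> \<in> E \<Longrightarrow> orbit X act \<rho> \<in> Orbs" by (auto simp: orbits_def)

lemma Union_Orbs: "\<Union>Orbs = E"
proof
  show "\<Union>Orbs \<subseteq> E" using orb_mem by blast
  show "E \<subseteq> \<Union>Orbs" using orb_in orb_self by blast
qed

lemma Orbs_disj: "O1 \<in> Orbs \<Longrightarrow> O2 \<in> Orbs \<Longrightarrow> x \<in> O1 \<Longrightarrow> x \<in> O2 \<Longrightarrow> O1 = O2"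
  using orb_mem by metis

abbreviation QT where "QT \<equiv> partition_quotient_top XT Orbs"

lemma istop: "istopology (\<lambda>U. U \<subseteq> Orbs \<and> openin XT (\<Union>U))"
  unfolding istopology_def
proof (rule conjI; intro allI impI)
  fix S T assume S: "S \<subseteq> Orbs \<and> openin XT (\<Union>S)" and T: "T \<subseteq> Orbs \<and> openin XT (\<Union>T)"
  have "\<Union>(S \<inter> T) = \<Union>S \<inter> \<Union>T"
  proof
    show "\<Union>(S \<inter> T) \<subseteq> \<Union>S \<inter> \<Union>T" by blast
    show "\<Union>S \<inter> \<Union>T \<subseteq> \<Union>(S \<inter> T)"
    proof
      fix x assume "x \<in> \<Union>S \<inter> \<Union>T"
      then obtain a b where a: "a \<in> S" "x \<in> a" and b: "b \<in> T" "x \<in> b" by blast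
      then have "a = b" using S T Orbs_disj by blast
      then show "x \<in> \<Union>(S \<inter> T)" using a b by blast
    qed
  qed
  moreover have "openin XT (\<Union>S \<inter> \<Union>T)" using S T by (intro openin_Int) simp_all
  moreover have "S \<inter> T \<subseteq> Orbs" using S by blast
  ultimately show "S \<inter> T \<subseteq> Orbs \<and> openin XT (\<Union>(S \<inter> T))" by simp
next
  fix K assume K: "\<forall>U\<in>K. U \<subseteq> Orbs \<and> openin XT (\<Union>U)"
  have "\<Union>(\<Union>K) = \<Union>(Union ` K)" by blast
  moreover have "openin XT (\<Union>(Union ` K))" using K by (intro openin_Union) blast
  moreover have "\<Union>K \<subseteq> Orbs" using K by blast
  ultimately show "\<Union>K \<subseteq> Orbs \<and> openin XT (\<Union>(\<Union>K))" by simp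
qed

lemma openin_QT: "openin QT U \<longleftrightarrow> U \<subseteq> Orbs \<and> openin XT (\<Union>U)"
  unfolding partition_quotient_top_def using istop by simp

lemma top_QT: "topspace QT = Orbs"
proof -
  have "openin QT Orbs" unfolding openin_QT using Union_Orbs E_sub by (simp add: openin_subtopology_refl)
  then have "Orbs \<subseteq> topspace QT" by (rule openin_subset)
  moreover have "topspace QT \<subseteq> Orbs" unfolding topspace_def using openin_QT by blast
  ultimately show ?thesis by blast
qed

definition f where "f Ob = Rm (SOME x. x \<in> Ob)"

lemma f_orb: assumes r: "\<rho> \<in> E" shows "f (orbit X act \<rho>) = Rm \<rho>"
proof -
  have "\<exists>x. x \<in> orbit X act \<rho>" using orb_self[OF r] by blast
  then have "(SOME x. x \<in> orbit X act \<rho>) \<in> orbit X act \<rho>" by (rule someI_ex)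
  then show ?thesis unfolding f_def using orb_fiber[OF r] by simp
qed

lemma f_mem: assumes "Ob \<in> Orbs" "x \<in> Ob" shows "f Ob = Rm x"
proof -
  have "x \<in> E" "Ob = orbit X act x" using orb_mem[OF assms] by auto
  then show ?thesis by (simp add: f_orb)
qed

lemma Rm_closed: "closed_map XT YT Rm"
  by (rule continuous_imp_closed_map[OF Rm_cont compact_XT Hausdorff_YT])

lemma f_img: "f ` C = Rm ` \<Union>C" if CO: "C \<subseteq> Orbs" for C
proof
  show "f ` C \<subseteq> Rm ` \<Union>C"
  proof
    fix y assume "y \<in> f ` C"
    then obtain Ob where Ob: "Ob \<in> C" and y: "y = f Ob" by blast
    then have "Ob \<in> Orbs" using CO by blast
    then obtain \<rho> where r: "\<rho> \<in> E" and e: "Ob = orbit X act \<rho>" by (auto simp: orbits_def)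
    have "\<rho> \<in> \<Union>C" using Ob e orb_self[OF r] by blast
    moreover have "y = Rm \<rho>" using y e f_orb[OF r] by simp
    ultimately show "y \<in> Rm ` \<Union>C" by simp
  qed
  show "Rm ` \<Union>C \<subseteq> f ` C"
  proof
    fix y assume "y \<in> Rm ` \<Union>C"
    then obtain x Ob where Ob: "Ob \<in> C" and x: "x \<in> Ob" and y: "y = Rm x" by blast
    have fx: "f Ob = Rm x" using f_mem[OF _ x] Ob CO by blast
    show "y \<in> f ` C" using Ob unfolding y fx[symmetric] by (rule imageI)
  qed
qed

lemma f_homeo: "homeomorphic_map QT YT f"
proof (rule bijective_closed_imp_homeomorphic_map)
  show fimg: "f ` topspace QT = topspace YT"
    unfolding top_QT top_YT using f_img[of Orbs] Union_Orbs by simp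
  show "continuous_map QT YT f"
    unfolding continuous_map_def
  proof
    show "f \<in> topspace QT \<rightarrow> topspace YT" using fimg by blast
    show "\<forall>U. openin YT U \<longrightarrow> openin QT {x \<in> topspace QT. f x \<in> U}"
    proof (intro allI impI)
      fix V assume V: "openin YT V"
      have "\<Union>{Ob \<in> Orbs. f Ob \<in> V} = {x \<in> topspace XT. Rm x \<in> V}"
      proof
        show "\<Union>{Ob \<in> Orbs. f Ob \<in> V} \<subseteq> {x \<in> topspace XT. Rm x \<in> V}"
        proof
          fix x assume "x \<in> \<Union>{Ob \<in> Orbs. f Ob \<in> V}"
          then obtain Ob where Ob: "Ob \<in> Orbs" "f Ob \<in> V" "x \<in> Ob" by blast
          then have "x \<in> E" "Rm x \<in> V" using f_mem orb_mem by metis+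
          then show "x \<in> {x \<in> topspace XT. Rm x \<in> V}" using top_XT by simp
        qed
        show "{x \<in> topspace XT. Rm x \<in> V} \<subseteq> \<Union>{Ob \<in> Orbs. f Ob \<in> V}"
        proof
          fix x assume x: "x \<in> {x \<in> topspace XT. Rm x \<in> V}"
          then have xE: "x \<in> E" using top_XT by simp
          have "Rm x \<in> V" using x by simp
          then have "f (orbit X act x) \<in> V" using f_orb[OF xE] by simp
          then show "x \<in> \<Union>{Ob \<in> Orbs. f Ob \<in> V}" using orb_in[OF xE] orb_self[OF xE] by blast
        qed
      qed
      moreover have "openin XT {x \<in> topspace XT. Rm x \<in> V}"
        by (rule openin_continuous_map_preimage[OF Rm_cont V])
      ultimately show "openin QT {x \<in> topspace QT. f x \<in> V}"
        unfolding openin_QT top_QT by simp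
    qed
  qed
  show "closed_map QT YT f"
    unfolding closed_map_def
  proof (intro allI impI)
    fix C assume C: "closedin QT C"
    then have CO: "C \<subseteq> Orbs" and op: "openin QT (Orbs - C)" by (auto simp: closedin_def top_QT)
    have "\<Union>C = topspace XT - \<Union>(Orbs - C)"
    proof
      show "\<Union>C \<subseteq> topspace XT - \<Union>(Orbs - C)"
      proof
        fix x assume "x \<in> \<Union>C"
        then obtain a where a: "a \<in> C" "x \<in> a" by blast
        then have xt: "x \<in> topspace XT" using CO Union_Orbs top_XT by blast
        have "x \<notin> \<Union>(Orbs - C)"
        proof
          assume "x \<in> \<Union>(Orbs - C)"
          then obtain b where b: "b \<in> Orbs" "b \<notin> C" "x \<in> b" by blast
          then have "a = b" using Orbs_disj[of a b x] a CO by blast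
          then show False using a b by blast
        qed
        then show "x \<in> topspace XT - \<Union>(Orbs - C)" using xt by blast
      qed
      show "topspace XT - \<Union>(Orbs - C) \<subseteq> \<Union>C"
        using Union_Orbs top_XT by blast
    qed
    moreover have "openin XT (\<Union>(Orbs - C))" using op by (simp add: openin_QT)
    ultimately have "closedin XT (\<Union>C)" by (metis closedin_diff closedin_topspace)
    then have "closedin YT (Rm ` \<Union>C)" using Rm_closed by (simp add: closed_map_def)
    then show "closedin YT (f ` C)" using f_img[OF CO] by simp
  qed
  show "inj_on f (topspace QT)"
  proof (rule inj_onI)
    fix O1 O2 assume O1: "O1 \<in> topspace QT" and O2: "O2 \<in> topspace QT" and e: "f O1 = f O2"
    obtain x1 where x1: "x1 \<in> E" "O1 = orbit X act x1" using O1 top_QT unfolding orbits_def by (simp only: mem_Collect_eq) blast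
    obtain x2 where x2: "x2 \<in> E" "O2 = orbit X act x2" using O2 top_QT unfolding orbits_def by (simp only: mem_Collect_eq) blast
    have "Rm x1 = Rm x2" using e x1 x2 f_orb by simp
    then show "O1 = O2" using x1 x2 orb_fiber by simp
  qed
qed

end



context ctx begin

interpretation XG: group X by (rule X_group)

lemma Rm_act: "c \<in> carrier X \<Longrightarrow> x \<in> E \<Longrightarrow> Rm (act c x) = Rm x"
  using act_restrict act_closed by (simp add: Rm_E)

lemma orbit_E: "x \<in> E \<Longrightarrow> y \<in> orbit X act x \<longleftrightarrow> (\<exists>c\<in>carrier X. y = act c x)"
  by (auto simp: orbit_def)

lemma R_open: assumes W: "openin XT W" shows "openin YT (Rm ` W)"
proof -
  have WE: "W \<subseteq> E" using openin_subset[OF W] top_XT by simp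
  define sat where "sat = {x\<in>topspace XT. \<exists>c\<in>carrier X. act c x \<in> W}"
  have sat_eq: "sat = \<Union>((\<lambda>c. {x\<in>topspace XT. act c x \<in> W}) ` carrier X)"
    unfolding sat_def by blast
  have sat_open: "openin XT sat"
    unfolding sat_eq
  proof (rule openin_Union)
    fix S assume "S \<in> (\<lambda>c. {x\<in>topspace XT. act c x \<in> W}) ` carrier X"
    then obtain c where c: "c \<in> carrier X" and S: "S = {x\<in>topspace XT. act c x \<in> W}" by blast
    show "openin XT S" unfolding S by (rule openin_continuous_map_preimage[OF act_cont[OF c] W])
  qed
  define \<Omega> where "\<Omega> = {Ob\<in>Orbs. Ob \<inter> W \<noteq> {}}"
  have U\<Omega>: "\<Union>\<Omega> = sat"
  proof
    show "\<Union>\<Omega> \<subseteq> sat"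
    proof
      fix x assume "x \<in> \<Union>\<Omega>"
      then obtain Ob y where Ob: "Ob \<in> Orbs" "x \<in> Ob" and y: "y \<in> Ob" "y \<in> W" unfolding \<Omega>_def by blast
      have xE: "x \<in> E" and Obe: "Ob = orbit X act x" using orb_mem[OF Ob] by auto
      obtain c where c: "c \<in> carrier X" "y = act c x" using y(1) Obe orbit_E[OF xE] by blast
      show "x \<in> sat" unfolding sat_def using xE top_XT c y by auto
    qed
    show "sat \<subseteq> \<Union>\<Omega>"
    proof
      fix x assume "x \<in> sat"
      then obtain c where xE: "x \<in> E" and c: "c \<in> carrier X" "act c x \<in> W" unfolding sat_def using top_XT by auto
      have "act c x \<in> orbit X act x" using orbit_E[OF xE] c by blast
      then have "orbit X act x \<in> \<Omega>" unfolding \<Omega>_def using orb_in[OF xE] c by blast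
      then show "x \<in> \<Union>\<Omega>" using orb_self[OF xE] by blast
    qed
  qed
  have \<Omega>O: "\<Omega> \<subseteq> Orbs" unfolding \<Omega>_def by blast
  have "openin QT \<Omega>" unfolding openin_QT using \<Omega>O U\<Omega> sat_open by simp
  then have "openin YT (f ` \<Omega>)"
    using homeomorphic_imp_open_map[OF f_homeo] by (simp add: open_map_def)
  moreover have "f ` \<Omega> = Rm ` W"
  proof -
    have "f ` \<Omega> = Rm ` sat" using f_img[OF \<Omega>O] U\<Omega> by simp
    also have "\<dots> = Rm ` W"
    proof
      show "Rm ` sat \<subseteq> Rm ` W"
      proof
        fix y assume "y \<in> Rm ` sat"
        then obtain x c where xE: "x \<in> E" and c: "c \<in> carrier X" "act c x \<in> W" and y: "y = Rm x"
          unfolding sat_def using top_XT by auto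
        have "y = Rm (act c x)" using Rm_act[OF c(1) xE] y by simp
        then show "y \<in> Rm ` W" using c(2) by blast
      qed
      show "Rm ` W \<subseteq> Rm ` sat"
      proof
        fix y assume "y \<in> Rm ` W"
        then obtain x where x: "x \<in> W" and y: "y = Rm x" by blast
        have xE: "x \<in> E" using x WE by blast
        have "act \<one>\<^bsub>X\<^esub> x \<in> W" using act_one[OF xE] x by simp
        then have "x \<in> sat" unfolding sat_def using xE top_XT by blast
        then show "y \<in> Rm ` sat" using y by blast
      qed
    qed
    finally show ?thesis .
  qed
  ultimately show ?thesis by simp
qed

lemma covering: "covering_map XT YT Rm"
  unfolding covering_map_def
proof (intro conjI ballI)
  show "continuous_map XT YT Rm" by (rule Rm_cont)
  show "Rm ` topspace XT = topspace YT" by (simp only: top_XT top_YT)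
  fix y assume "y \<in> topspace YT"
  then obtain \<rho> where r: "\<rho> \<in> E" and y: "y = Rm \<rho>" unfolding top_YT by blast
  define C' where "C' = carrier X - {\<one>\<^bsub>X\<^esub>}"
  have "\<forall>c\<in>C'. \<exists>V W. openin XT V \<and> openin XT W \<and> \<rho> \<in> V \<and> act c \<rho> \<in> W \<and> disjnt V W"
  proof
    fix c assume c: "c \<in> C'"
    then have cX: "c \<in> carrier X" and c1: "c \<noteq> \<one>\<^bsub>X\<^esub>" by (auto simp: C'_def)
    have "act c \<rho> \<noteq> \<rho>" using free[OF cX r] c1 by blast
    moreover have "act c \<rho> \<in> topspace XT" "\<rho> \<in> topspace XT" using act_closed[OF cX r] r top_XT by auto
    ultimately show "\<exists>V W. openin XT V \<and> openin XT W \<and> \<rho> \<in> V \<and> act c \<rho> \<in> W \<and> disjnt V W"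
      using Hausdorff_XT unfolding Hausdorff_space_def by metis
  qed
  then obtain V W where VW: "\<And>c. c \<in> C' \<Longrightarrow> openin XT (V c) \<and> openin XT (W c) \<and> \<rho> \<in> V c \<and> act c \<rho> \<in> W c \<and> disjnt (V c) (W c)"
    by metis
  define U where "U = {x\<in>topspace XT. \<forall>c\<in>C'. x \<in> V c \<and> act c x \<in> W c}"
  have fin: "finite C'" using X_finite by (simp add: C'_def)
  have U_open: "openin XT U"
    unfolding U_def
  proof (rule openin_all[OF fin])
    fix c assume c: "c \<in> C'"
    then have cX: "c \<in> carrier X" by (simp add: C'_def)
    have "{x \<in> topspace XT. x \<in> V c \<and> act c x \<in> W c} = V c \<inter> {x \<in> topspace XT. act c x \<in> W c}"
      using openin_subset[of XT "V c"] VW[OF c] by blast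
    moreover have "openin XT (V c \<inter> {x \<in> topspace XT. act c x \<in> W c})"
      using VW[OF c] openin_continuous_map_preimage[OF act_cont[OF cX]] by blast
    ultimately show "openin XT {x \<in> topspace XT. x \<in> V c \<and> act c x \<in> W c}" by simp
  qed
  have UE: "U \<subseteq> E" unfolding U_def using top_XT by blast
  have rU: "\<rho> \<in> U" unfolding U_def using r top_XT VW by auto
  have key: "c = \<one>\<^bsub>X\<^esub>" if c: "c \<in> carrier X" and x: "x \<in> U" and cx: "act c x \<in> U" for c x
  proof (rule ccontr)
    assume "c \<noteq> \<one>\<^bsub>X\<^esub>"
    then have cC: "c \<in> C'" using c by (simp add: C'_def)
    have "act c x \<in> W c" using x cC unfolding U_def by blast
    moreover have "act c x \<in> V c" using cx cC unfolding U_def by blast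
    ultimately show False using VW[OF cC] by (auto simp: disjnt_def)
  qed
  define T where "T = Rm ` U"
  define v where "v = (\<lambda>c. act c ` U) ` carrier X"
  have act_inv: "act (inv\<^bsub>X\<^esub> c) (act c x) = x" if "c \<in> carrier X" "x \<in> E" for c x
    using act_comp[of "inv\<^bsub>X\<^esub> c" c x] act_one that by simp
  have act_inv2: "act c (act (inv\<^bsub>X\<^esub> c) x) = x" if "c \<in> carrier X" "x \<in> E" for c x
    using act_comp[of c "inv\<^bsub>X\<^esub> c" x] act_one that by simp
  have sheet_eq: "act c ` U = {x\<in>topspace XT. act (inv\<^bsub>X\<^esub> c) x \<in> U}" if c: "c \<in> carrier X" for c
  proof
    show "act c ` U \<subseteq> {x\<in>topspace XT. act (inv\<^bsub>X\<^esub> c) x \<in> U}"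
      using act_inv[OF c] act_closed[OF c] UE top_XT by auto
    show "{x\<in>topspace XT. act (inv\<^bsub>X\<^esub> c) x \<in> U} \<subseteq> act c ` U"
    proof
      fix x assume "x \<in> {x\<in>topspace XT. act (inv\<^bsub>X\<^esub> c) x \<in> U}"
      then have xE: "x \<in> E" and xu: "act (inv\<^bsub>X\<^esub> c) x \<in> U" using top_XT by auto
      have "x = act c (act (inv\<^bsub>X\<^esub> c) x)" using act_inv2[OF c xE] by simp
      then show "x \<in> act c ` U" using xu by blast
    qed
  qed
  have sheet_open: "openin XT (act c ` U)" if c: "c \<in> carrier X" for c
    unfolding sheet_eq[OF c] by (rule openin_continuous_map_preimage[OF act_cont[OF XG.inv_closed[OF c]] U_open])
  have sheetE: "act c ` U \<subseteq> E" if c: "c \<in> carrier X" for c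
    using act_closed[OF c] UE by blast
  have T_open: "openin YT T" unfolding T_def by (rule R_open[OF U_open])
  show "\<exists>T. y \<in> T \<and> openin YT T \<and>
        (\<exists>v. \<Union>v = {x \<in> topspace XT. Rm x \<in> T} \<and> (\<forall>u\<in>v. openin XT u) \<and> pairwise disjnt v \<and>
             (\<forall>u\<in>v. homeomorphic_map (subtopology XT u) (subtopology YT T) Rm))"
  proof (intro exI conjI)
    show "y \<in> T" unfolding T_def y using rU by blast
    show "openin YT T" by (rule T_open)
    show "\<Union>v = {x \<in> topspace XT. Rm x \<in> T}"
    proof
      show "\<Union>v \<subseteq> {x \<in> topspace XT. Rm x \<in> T}"
      proof
        fix x assume "x \<in> \<Union>v"
        then obtain c u where c: "c \<in> carrier X" and u: "u \<in> U" and x: "x = act c u" unfolding v_def by blast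
        have uE: "u \<in> E" using u UE by blast
        have "Rm x = Rm u" using x Rm_act[OF c uE] by simp
        then show "x \<in> {x \<in> topspace XT. Rm x \<in> T}" using x act_closed[OF c uE] u top_XT unfolding T_def by auto
      qed
      show "{x \<in> topspace XT. Rm x \<in> T} \<subseteq> \<Union>v"
      proof
        fix x assume "x \<in> {x \<in> topspace XT. Rm x \<in> T}"
        then obtain u where xE: "x \<in> E" and u: "u \<in> U" and e: "Rm x = Rm u" unfolding T_def using top_XT by auto
        have uE: "u \<in> E" using u UE by blast
        have "x \<in> orbit X act u" using orb_fiber[OF uE] xE e by simp
        then obtain c where c: "c \<in> carrier X" and x: "x = act c u" using orbit_E[OF uE] by blast
        then show "x \<in> \<Union>v" using u unfolding v_def by blast
      qed
    qed
    show "\<forall>u\<in>v. openin XT u" unfolding v_def using sheet_open by blast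
    show "pairwise disjnt v"
      unfolding pairwise_def
    proof (intro ballI impI)
      fix s1 s2 assume s1: "s1 \<in> v" and s2: "s2 \<in> v" and ne: "s1 \<noteq> s2"
      obtain c1 where c1: "c1 \<in> carrier X" "s1 = act c1 ` U" using s1 unfolding v_def by blast
      obtain c2 where c2: "c2 \<in> carrier X" "s2 = act c2 ` U" using s2 unfolding v_def by blast
      show "disjnt s1 s2"
        unfolding disjnt_def
      proof (rule ccontr)
        assume "s1 \<inter> s2 \<noteq> {}"
        then obtain u1 u2 where u1: "u1 \<in> U" and u2: "u2 \<in> U" and e: "act c1 u1 = act c2 u2"
          using c1 c2 by blast
        have u1E: "u1 \<in> E" and u2E: "u2 \<in> E" using u1 u2 UE by auto
        have ic: "inv\<^bsub>X\<^esub> c1 \<otimes>\<^bsub>X\<^esub> c2 \<in> carrier X" using c1 c2 by simp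
        have "u1 = act (inv\<^bsub>X\<^esub> c1) (act c2 u2)" using act_inv[OF c1(1) u1E] e by simp
        also have "\<dots> = act (inv\<^bsub>X\<^esub> c1 \<otimes>\<^bsub>X\<^esub> c2) u2" using act_comp[of "inv\<^bsub>X\<^esub> c1" c2 u2] c1 c2 u2E by simp
        finally have "act (inv\<^bsub>X\<^esub> c1 \<otimes>\<^bsub>X\<^esub> c2) u2 \<in> U" using u1 by simp
        then have "inv\<^bsub>X\<^esub> c1 \<otimes>\<^bsub>X\<^esub> c2 = \<one>\<^bsub>X\<^esub>" using key[OF ic u2] by blast
        then have "c2 = c1" using c1 c2 XG.inv_comm XG.inv_equality by (metis XG.inv_closed XG.inv_inv XG.r_inv)
        then show False using ne c1 c2 by simp
      qed
    qed
    show "\<forall>u\<in>v. homeomorphic_map (subtopology XT u) (subtopology YT T) Rm"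
    proof
      fix s assume "s \<in> v"
      then obtain c where c: "c \<in> carrier X" and s: "s = act c ` U" unfolding v_def by blast
      have sE: "s \<subseteq> E" using sheetE[OF c] s by simp
      have sopen: "openin XT s" using sheet_open[OF c] s by simp
      have tops: "topspace (subtopology XT s) = s" using sE top_XT by auto
      have RmT: "Rm ` s = T"
      proof
        show "Rm ` s \<subseteq> T" unfolding s T_def using Rm_act[OF c] UE by auto
        show "T \<subseteq> Rm ` s"
        proof
          fix t assume "t \<in> T"
          then obtain u where u: "u \<in> U" and t: "t = Rm u" unfolding T_def by blast
          have "t = Rm (act c u)" using Rm_act[OF c] u UE t by auto
          then show "t \<in> Rm ` s" using u s by blast
        qed
      qed
      have TY: "T \<subseteq> topspace YT" using openin_subset[OF T_open] .
      show "homeomorphic_map (subtopology XT s) (subtopology YT T) Rm"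
      proof (rule bijective_open_imp_homeomorphic_map)
        show "continuous_map (subtopology XT s) (subtopology YT T) Rm"
          by (rule continuous_map_into_subtopology[OF continuous_map_from_subtopology[OF Rm_cont]])
            (use RmT tops in blast)
        show "open_map (subtopology XT s) (subtopology YT T) Rm"
          unfolding open_map_def
        proof (intro allI impI)
          fix W assume W: "openin (subtopology XT s) W"
          then have W': "openin XT W" and Ws: "W \<subseteq> s" using openin_open_subtopology[OF sopen] by auto
          have "openin YT (Rm ` W)" by (rule R_open[OF W'])
          moreover have "Rm ` W \<subseteq> T" using Ws RmT by blast
          ultimately show "openin (subtopology YT T) (Rm ` W)"
            using openin_open_subtopology[OF T_open] by blast
        qed
        show "Rm ` topspace (subtopology XT s) = topspace (subtopology YT T)"
          using tops RmT TY by auto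
        show "inj_on Rm (topspace (subtopology XT s))"
          unfolding tops
        proof (rule inj_onI)
          fix x1 x2 assume x1: "x1 \<in> s" and x2: "x2 \<in> s" and e: "Rm x1 = Rm x2"
          obtain u1 where u1: "u1 \<in> U" "x1 = act c u1" using x1 s by blast
          obtain u2 where u2: "u2 \<in> U" "x2 = act c u2" using x2 s by blast
          have u1E: "u1 \<in> E" and u2E: "u2 \<in> E" using u1 u2 UE by auto
          have "Rm u1 = Rm u2" using e u1 u2 Rm_act[OF c u1E] Rm_act[OF c u2E] by simp
          then have "u1 \<in> orbit X act u2" using orb_fiber[OF u2E] u1E by simp
          then obtain d where d: "d \<in> carrier X" and du: "u1 = act d u2" using orbit_E[OF u2E] by blast
          have "d = \<one>\<^bsub>X\<^esub>" using key[OF d u2(1)] du u1(1) by simp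
          then have "u1 = u2" using du act_one[OF u2E] by simp
          then show "x1 = x2" using u1 u2 by simp
        qed
      qed
    qed
  qed
qed

end

theorem mainTheorem19:
  fixes G :: "'g monoid" and A :: "'g set"
    and \<psi> :: "'g set \<Rightarrow> (complex^'n^'n) set"
  assumes "group G"
    and "\<exists>S. finite S \<and> S \<subseteq> carrier G \<and> generate G S = carrier G"
    and "A \<lhd> G"
    and "finite (rcosets\<^bsub>G\<^esub> A)"
    and "\<psi> \<in> hom (G Mod A) proj_unitary_group"
  defines "E \<equiv> Hom_A_psi G A \<psi>"
    and "X \<equiv> char_group G A"
    and "R \<equiv> (\<lambda>\<rho> \<in> Hom_A_psi G A \<psi>. restrict \<rho> A)"
  shows "finite (carrier X) \<and> group X
     \<and> group_action X E (char_action G A E)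
     \<and> (\<forall>c \<in> carrier X. \<forall>\<rho> \<in> E. char_action G A E c \<rho> = \<rho> \<longrightarrow> c = \<one>\<^bsub>X\<^esub>)
     \<and> R ` E \<subseteq> Hom_circle G A
     \<and> (\<exists>f. homeomorphic_map
              (partition_quotient_top (subtopology (pointwise_top (carrier G)) E)
                 (orbits X E (char_action G A E)))
              (subtopology (pointwise_top A) (R ` E)) f
            \<and> (\<forall>\<rho> \<in> E. f (orbit X (char_action G A E) \<rho>) = R \<rho>))
     \<and> covering_map (subtopology (pointwise_top (carrier G)) E)
                     (subtopology (pointwise_top A) (R ` E)) R
     \<and> (\<forall>\<rho> \<in> E. {\<rho>' \<in> E. R \<rho>' = R \<rho>} = orbit X (char_action G A E) \<rho>)"
proof -
  interpret C: ctx G A \<psi>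
    by (rule ctx.intro[OF assms(1) assms(3) assms(4) assms(5)])
  have e1: "Hom_A_psi G A \<psi> = C.E" by (simp add: C.E_def)
  have e2: "char_group G A = C.X" by (simp add: C.X_def)
  have e3: "char_action G A C.E = C.act" by (simp add: C.act_def)
  have e4: "(\<lambda>\<rho>\<in>C.E. restrict \<rho> A) = C.Rm" by (simp add: C.Rm_def)
  have fib: "\<forall>\<rho> \<in> C.E. {\<rho>' \<in> C.E. C.Rm \<rho>' = C.Rm \<rho>} = orbit C.X C.act \<rho>"
    using C.orb_fiber by simp
  have img: "C.Rm ` C.E \<subseteq> Hom_circle G A"
    using C.R_image C.Rm_E by auto
  have hom: "\<exists>f. homeomorphic_map (partition_quotient_top (subtopology (pointwise_top (carrier G)) C.E)
                 (orbits C.X C.E C.act)) (subtopology (pointwise_top A) (C.Rm ` C.E)) f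
            \<and> (\<forall>\<rho> \<in> C.E. f (orbit C.X C.act \<rho>) = C.Rm \<rho>)"
    using C.f_homeo C.f_orb by blast
  show ?thesis
    unfolding assms(6,7,8) e1 e2 e3 e4
    using C.X_finite C.X_group C.action C.free img hom C.covering fib by blast
qed

end
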